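(* For every countable ordinal $\beta\ge1$ and every finite $m\ge1$, the linear order $\omega^\beta\cdot m$ (ordinal exponentiation and multiplication) satisfies $\mathsf{rk}(\omega^\beta\cdot m)=\omega\cdot\beta+\lfloor\log_2 m\rfloor$.
   Context: An ordinal is regarded as the linear order $(\alpha,\in)$. Let $\mathcal F$ be the class of finite linear orders (language $\{<\}$); countable linear orders are the structures considered; substructures are suborders and $\mathsf{age}(X)$ is the set of finite suborders of $X$. For $A\le B$, $B$ is a prime extension of $A$ if $|B\setminus A|=1$; a realization of $B$ in $X$ (where $A\le X$) is $C\le X$ with $A\le C$ and an order-isomorphism $B\to C$ fixing $A$ pointwise. For $F\in\mathsf{age}(X)$ define by recursion: $\mathsf{rk}_X(F)\ge0$ always; $\mathsf{rk}_X(F)\ge\gamma+1$ iff every prime extension $B\in\mathcal F$ of $F$ has a realization $C$ in $X$ with $\mathsf{rk}_X(C)\ge\gamma$; for limit $\gamma$, $\mathsf{rk}_X(F)\ge\gamma$ iff $\mathsf{rk}_X(F)\ge\delta$ for all $\delta<\gamma$. $\mathsf{rk}_X(F)=\sup\{\gamma:\mathsf{rk}_X(F)\ge\gamma\}$ (or $\infty$ if this holds for all ordinals), and $\mathsf{rk}(X)=\mathsf{rk}_X(\emptyset)$. *)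

theory Defs
  imports Complex_Main "HOL-Library.Countable_Set"
begin

text \<open>Linear orders are given as reflexive linear-order relations (Linear_order, from Main);
  the structure X is the relation r with carrier Field r.
  Finite sets F with F a subset of Field r are the elements of age(X).\<close>

text \<open>A prime extension B of the finite suborder F: a finite linear order whose carrier
  is F plus one new point (canonically represented as Some ` F plus None) and which induces
  on F the order of X.\<close>
definition prime_ext :: "'a rel \<Rightarrow> 'a set \<Rightarrow> 'a option rel \<Rightarrow> bool" where
  "prime_ext r F rB \<longleftrightarrow> Linear_order rB \<and> Field rB = insert None (Some ` F) \<and>
     (\<forall>a\<in>F. \<forall>b\<in>F. (Some a, Some b) \<in> rB \<longleftrightarrow> (a, b) \<in> r)"

definition realization :: "'a rel \<Rightarrow> 'a set \<Rightarrow> 'a option rel \<Rightarrow> 'a set \<Rightarrow> bool" where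
  "realization r F rB C \<longleftrightarrow> F \<subseteq> C \<and> C \<subseteq> Field r \<and>
     (\<exists>h. bij_betw h (Field rB) C \<and> (\<forall>a\<in>F. h (Some a) = a) \<and>
          (\<forall>x\<in>Field rB. \<forall>y\<in>Field rB. (x, y) \<in> rB \<longleftrightarrow> (h x, h y) \<in> r))"

text \<open>rk_ge_at r W w F : rk_X(F) is at least the ordinal (order type) of the strict initial
  segment of the well-order W below w.  Defined by well-founded recursion on W, following the
  three cases of the paper: zero, successor (w has an immediate predecessor v), limit.\<close>
definition rk_ge_at :: "'a rel \<Rightarrow> 'c rel \<Rightarrow> 'c \<Rightarrow> 'a set \<Rightarrow> bool" where
  "rk_ge_at r W = wfrec (W - Id) (\<lambda>rec w F.
     if (\<forall>v. (v, w) \<notin> W - Id) then True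
     else if (\<exists>v. (v, w) \<in> W - Id \<and> (\<forall>u. (u, w) \<in> W - Id \<longrightarrow> (u, v) \<in> W)) then
       (\<exists>v. (v, w) \<in> W - Id \<and> (\<forall>u. (u, w) \<in> W - Id \<longrightarrow> (u, v) \<in> W) \<and>
            (\<forall>rB. prime_ext r F rB \<longrightarrow> (\<exists>C. realization r F rB C \<and> rec v C)))
     else (\<forall>v. (v, w) \<in> W - Id \<longrightarrow> rec v F))"

text \<open>Add a new top element None to a well-order G; the segment below None has the
  order type of G.\<close>
definition top_ext :: "'c rel \<Rightarrow> 'c option rel" where
  "top_ext G = {(Some x, Some y) | x y. (x, y) \<in> G} \<union>
               {(x, None) | x. x = None \<or> (\<exists>y. x = Some y \<and> y \<in> Field G)}"

text \<open>rk_ge r F G : rk_X(F) \<ge> the ordinal of the well-order G.\<close>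
definition rk_ge :: "'a rel \<Rightarrow> 'a set \<Rightarrow> 'c rel \<Rightarrow> bool" where
  "rk_ge r F G = rk_ge_at r (top_ext G) None F"

text \<open>Ordinal exponentiation omega^beta (beta the order type of the well-order Bo), as the
  set of finitely supported functions Field Bo \<rightarrow> nat ordered by comparing at the
  Bo-largest point of difference (the standard definition, as in HOL-Cardinals oexp).\<close>
definition omega_pow :: "'b rel \<Rightarrow> ('b \<Rightarrow> nat) rel" where
  "omega_pow Bo = (let S = {f. finite {x. f x \<noteq> 0} \<and> {x. f x \<noteq> 0} \<subseteq> Field Bo} in
     {(f, g). f \<in> S \<and> g \<in> S \<and>
        (f = g \<or> (\<exists>x. f x < g x \<and> (\<forall>y. (x, y) \<in> Bo \<and> y \<noteq> x \<longrightarrow> f y = g y)))})"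

definition ord_mult_nat :: "'a rel \<Rightarrow> nat \<Rightarrow> (nat \<times> 'a) rel" where
  "ord_mult_nat r m = {((i, x), (j, y)). i < m \<and> j < m \<and> x \<in> Field r \<and> y \<in> Field r \<and>
      (i < j \<or> (i = j \<and> (x, y) \<in> r))}"

text \<open>Ordinal product omega \<cdot> beta: beta copies of omega in succession.\<close>
definition omega_times :: "'b rel \<Rightarrow> ('b \<times> nat) rel" where
  "omega_times Bo = {((b, n), (c, p)). b \<in> Field Bo \<and> c \<in> Field Bo \<and>
      (((b, c) \<in> Bo \<and> b \<noteq> c) \<or> (b = c \<and> n \<le> p))}"

definition ord_plus_nat :: "'a rel \<Rightarrow> nat \<Rightarrow> ('a + nat) rel" where
  "ord_plus_nat r k = {(Inl x, Inl y) | x y. (x, y) \<in> r} \<union>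
     {(Inl x, Inr j) | x j. x \<in> Field r \<and> j < k} \<union> {(Inr i, Inr j) | i j. i \<le> j \<and> j < k}"

end

theory Submission
  imports Defs "HOL-Library.Discrete_Functions"
begin

unbundle cardinal_syntax

lemma Field_top_ext: "Field (top_ext G) = insert None (Some ` Field G)"
  unfolding top_ext_def Field_def by (auto simp: Domain_def Range_def)

lemma top_ext_iff:
  "(u, v) \<in> top_ext G \<longleftrightarrow>
     (case (u, v) of (Some x, Some y) \<Rightarrow> (x, y) \<in> G
       | (_, None) \<Rightarrow> u \<in> insert None (Some ` Field G) | (None, Some _) \<Rightarrow> False)"
  unfolding top_ext_def by (cases u; cases v) auto

lemma Well_order_top_ext:
  assumes "Well_order G" shows "Well_order (top_ext G)"
proof -
  have lin: "Linear_order G" and wf: "wf (G - Id)" using assms by (auto simp: order_on_defs)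
  have rf: "refl_on (Field G) G" and tr: "trans G" and an: "antisym G" and tot: "total_on (Field G) G"
    using lin by (auto simp: order_on_defs)
  have FG: "\<And>x y. (x,y) \<in> G \<Longrightarrow> x \<in> Field G \<and> y \<in> Field G" by (auto simp: Field_def)
  have "refl_on (Field (top_ext G)) (top_ext G)"
    using rf unfolding Field_top_ext refl_on_def by (auto simp: top_ext_iff)
  moreover have "trans (top_ext G)"
    unfolding trans_def top_ext_iff
    apply (intro allI impI)
    subgoal for x y z using tr FG by (cases x; cases y; cases z) (auto dest: transD)
    done
  moreover have "antisym (top_ext G)"
    unfolding antisym_def top_ext_iff
    apply (intro allI impI)
    subgoal for x y using an by (cases x; cases y) (auto dest: antisymD)
    done
  moreover have "total_on (Field (top_ext G)) (top_ext G)"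
    unfolding total_on_def Field_top_ext top_ext_iff using tot
    by (auto simp: total_on_def)
  moreover have "wf (top_ext G - Id)"
  proof -
    let ?f = "\<lambda>z. case z of None \<Rightarrow> (1::nat, undefined) | Some x \<Rightarrow> (0, x)"
    have "top_ext G - Id \<subseteq> inv_image (less_than <*lex*> (G - Id)) ?f"
    proof
      fix p assume "p \<in> top_ext G - Id"
      then obtain u v where p: "p = (u,v)" "(u,v) \<in> top_ext G" "u \<noteq> v" by (cases p) auto
      then show "p \<in> inv_image (less_than <*lex*> (G - Id)) ?f"
        by (cases u; cases v) (auto simp: top_ext_iff)
    qed
    then show ?thesis by (rule wf_subset[OF wf_inv_image[OF wf_lex_prod[OF wf_less_than wf]]])
  qed
  ultimately show ?thesis by (auto simp: order_on_defs intro: FieldI1 FieldI2)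
qed

lemma Field_omega_times: assumes "Refl L" shows "Field (omega_times L) = Field L \<times> UNIV"
proof
  show "Field (omega_times L) \<subseteq> Field L \<times> UNIV"
  proof
    fix p assume "p \<in> Field (omega_times L)"
    then obtain q where "(p,q) \<in> omega_times L \<or> (q,p) \<in> omega_times L" by (auto simp: Field_def)
    then show "p \<in> Field L \<times> UNIV" by (cases p; cases q) (auto simp: omega_times_def)
  qed
next
  show "Field L \<times> UNIV \<subseteq> Field (omega_times L)"
  proof
    fix p assume "p \<in> Field L \<times> (UNIV::nat set)"
    then have "(p,p) \<in> omega_times L" by (cases p) (auto simp: omega_times_def)
    then show "p \<in> Field (omega_times L)" by (auto simp: Field_def)
  qed
qed

lemma Well_order_omega_times:
  assumes "Well_order L" shows "Well_order (omega_times L)"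
proof -
  have lin: "Linear_order L" and wf: "wf (L - Id)" using assms by (auto simp: order_on_defs)
  have rf: "refl_on (Field L) L" and tr: "trans L" and an: "antisym L" and tot: "total_on (Field L) L"
    using lin by (auto simp: order_on_defs)
  have F: "Field (omega_times L) = Field L \<times> UNIV" using rf Field_omega_times by blast
  have "refl_on (Field (omega_times L)) (omega_times L)"
    unfolding F unfolding refl_on_def omega_times_def using rf by (auto simp: refl_on_def)
  moreover have "trans (omega_times L)"
    unfolding trans_def omega_times_def using tr an
    by (auto dest: transD antisymD)
  moreover have "antisym (omega_times L)"
    unfolding antisym_def omega_times_def using an by (auto dest: antisymD)
  moreover have "total_on (Field (omega_times L)) (omega_times L)"
    unfolding F unfolding total_on_def omega_times_def using tot by (auto simp: total_on_def)
  moreover have "wf (omega_times L - Id)"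
  proof -
    have "omega_times L - Id \<subseteq> (L - Id) <*lex*> less_than"
      unfolding omega_times_def by auto
    then show ?thesis by (rule wf_subset[OF wf_lex_prod[OF wf wf_less_than]])
  qed
  ultimately show ?thesis by (auto simp: order_on_defs intro: FieldI1 FieldI2)
qed


lemma rk_ge_at_unfold:
  assumes wf: "wf (W - Id)"
  shows "rk_ge_at r W w F =
    (if (\<forall>v. (v, w) \<notin> W - Id) then True
     else if (\<exists>v. (v, w) \<in> W - Id \<and> (\<forall>u. (u, w) \<in> W - Id \<longrightarrow> (u, v) \<in> W)) then
       (\<exists>v. (v, w) \<in> W - Id \<and> (\<forall>u. (u, w) \<in> W - Id \<longrightarrow> (u, v) \<in> W) \<and>
            (\<forall>rB. prime_ext r F rB \<longrightarrow> (\<exists>C. realization r F rB C \<and> rk_ge_at r W v C)))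
     else (\<forall>v. (v, w) \<in> W - Id \<longrightarrow> rk_ge_at r W v F))"
  unfolding rk_ge_at_def
  apply (subst wfrec_fixpoint[OF wf])
  subgoal unfolding adm_wf_def
    apply (intro allI impI ext)
    apply (rule if_cong[OF refl refl])
    apply (rule if_cong[OF refl])
     apply (metis (no_types, lifting))
    apply (metis (no_types, lifting))
    done
  apply simp
  done

definition SW :: "'c rel \<Rightarrow> 'c \<Rightarrow> 'c rel" where
  "SW W w = Restr W (underS W w)"

lemma SW_WO: "Well_order W \<Longrightarrow> Well_order (SW W w)"
  unfolding SW_def by (rule Well_order_Restr)

lemma SW_mono:
  assumes W: "Well_order W" and ab: "(a,b) \<in> W"
  shows "SW W a \<le>o SW W b"
proof -
  have wo: "wo_rel W" using W by (simp add: wo_rel_def)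
  have "underS W a \<subseteq> underS W b"
  proof
    fix x assume "x \<in> underS W a"
    then have "(x,a) \<in> W" "x \<noteq> a" by (auto simp: underS_def)
    moreover have "trans W" "antisym W" using W by (auto simp: order_on_defs)
    ultimately show "x \<in> underS W b" using ab unfolding underS_def
      by (auto dest: transD antisymD)
  qed
  then show ?thesis unfolding SW_def
    using ofilter_subset_ordLeq[OF W wo_rel.underS_ofilter[OF wo] wo_rel.underS_ofilter[OF wo]] by blast
qed

lemma SW_strict:
  assumes W: "Well_order W" and ab: "(a,b) \<in> W" "a \<noteq> b"
  shows "SW W a <o SW W b"
proof -
  have wo: "wo_rel W" using W by (simp add: wo_rel_def)
  have tr: "trans W" and an: "antisym W" using W by (auto simp: order_on_defs)
  have "underS W a \<subseteq> underS W b"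
  proof
    fix x assume "x \<in> underS W a"
    then have "(x,a) \<in> W" "x \<noteq> a" by (auto simp: underS_def)
    then show "x \<in> underS W b" using ab tr an unfolding underS_def
      by (auto dest: transD antisymD)
  qed
  moreover have "a \<in> underS W b" "a \<notin> underS W a" using ab by (auto simp: underS_def)
  ultimately have "underS W a < underS W b" by blast
  then show ?thesis unfolding SW_def
    using ofilter_subset_ordLess[OF W wo_rel.underS_ofilter[OF wo] wo_rel.underS_ofilter[OF wo]] by blast
qed

lemma SW_below:
  assumes W: "Well_order W" and Z: "Well_order Z" and lt: "Z <o SW W b"
  shows "\<exists>a. (a,b) \<in> W \<and> a \<noteq> b \<and> Z =o SW W a"
proof -
  have wo: "wo_rel W" using W by (simp add: wo_rel_def)
  have of: "wo_rel.ofilter W (underS W b)" using wo_rel.underS_ofilter[OF wo] .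
  have FR: "Field (SW W b) = underS W b"
    unfolding SW_def using Field_Restr_ofilter[OF W of] .
  obtain a where a: "a \<in> Field (SW W b)" and iso: "Z =o Restr (SW W b) (underS (SW W b) a)"
    using ordLess_iff_ordIso_Restr[OF SW_WO[OF W] Z] lt by blast
  have aU: "a \<in> underS W b" using a FR by simp
  have "underS (SW W b) a = underS W a"
  proof
    show "underS (SW W b) a \<subseteq> underS W a" unfolding SW_def underS_def by auto
  next
    show "underS W a \<subseteq> underS (SW W b) a"
    proof
      fix x assume x: "x \<in> underS W a"
      then have "x \<in> underS W b" using of aU unfolding wo_rel.ofilter_def[OF wo] under_def underS_def
        by auto
      then show "x \<in> underS (SW W b) a" using x aU unfolding SW_def underS_def by auto
    qed
  qed
  moreover have "Restr (SW W b) (underS W a) = SW W a"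
  proof -
    have "underS W a \<subseteq> underS W b"
      using of aU unfolding wo_rel.ofilter_def[OF wo] under_def underS_def by auto
    then show ?thesis unfolding SW_def by auto
  qed
  ultimately have "Z =o SW W a" using iso by simp
  then show ?thesis using aU by (auto simp: underS_def)
qed

lemma SW_zero:
  assumes Z: "Well_order Z" and none: "\<forall>v. (v, w) \<notin> W - Id"
  shows "SW W w \<le>o Z"
proof -
  have "underS W w = {}" using none by (auto simp: underS_def)
  then have e: "SW W w = {}" by (simp add: SW_def)
  have "Well_order ({} :: 'c rel)" using well_order_on_empty by simp
  moreover have "embed {} Z f" for f by (simp add: embed_def)
  ultimately show ?thesis unfolding e ordLeq_def using Z by blast
qed


definition cutp :: "'a rel \<Rightarrow> 'a set \<Rightarrow> ('a \<Rightarrow> bool) \<Rightarrow> bool" where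
  "cutp r F P \<longleftrightarrow> (\<forall>x\<in>F. \<forall>y\<in>F. (x,y) \<in> r \<and> P y \<longrightarrow> P x)"

definition inGap :: "'a rel \<Rightarrow> 'a set \<Rightarrow> ('a \<Rightarrow> bool) \<Rightarrow> 'a \<Rightarrow> bool" where
  "inGap r F P c \<longleftrightarrow> (\<forall>x\<in>F. ((x,c) \<in> r \<longleftrightarrow> P x))"

lemma Field_prime_ext: "prime_ext r F B \<Longrightarrow> Field B = insert None (Some ` F)"
  by (simp add: prime_ext_def)

lemma prime_cut:
  assumes "prime_ext r F B"
  shows "cutp r F (\<lambda>x. (Some x, None) \<in> B)"
proof -
  have "trans B" using assms by (auto simp: prime_ext_def order_on_defs)
  then show ?thesis using assms unfolding cutp_def prime_ext_def by (meson transD)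
qed

lemma realization_iff:
  assumes r: "Linear_order r" and F: "F \<subseteq> Field r" and B: "prime_ext r F B"
  shows "realization r F B C \<longleftrightarrow>
    (\<exists>c. c \<in> Field r - F \<and> C = insert c F \<and> inGap r F (\<lambda>x. (Some x, None) \<in> B) c)"
proof
  have FB: "Field B = insert None (Some ` F)" using B by (simp add: prime_ext_def)
  have BL: "Linear_order B" using B unfolding prime_ext_def by blast
  have Bord: "\<forall>a\<in>F. \<forall>b\<in>F. (Some a, Some b) \<in> B \<longleftrightarrow> (a, b) \<in> r" using B by (simp add: prime_ext_def)
  assume R: "realization r F B C"
  then obtain h where bij: "bij_betw h (Field B) C" and hfix: "\<forall>a\<in>F. h (Some a) = a"
    and ord: "\<forall>x\<in>Field B. \<forall>y\<in>Field B. (x, y) \<in> B \<longleftrightarrow> (h x, h y) \<in> r"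
    and CF: "F \<subseteq> C" "C \<subseteq> Field r"
    unfolding realization_def by blast
  let ?c = "h None"
  have Ceq: "C = insert ?c F"
  proof -
    have "C = h ` Field B" using bij by (simp add: bij_betw_def)
    also have "\<dots> = insert ?c F" using hfix unfolding FB by force
    finally show ?thesis .
  qed
  have "?c \<notin> F"
  proof
    assume "?c \<in> F"
    then have "h (Some ?c) = h None" using hfix by simp
    moreover have "Some ?c \<in> Field B" "None \<in> Field B" using \<open>?c \<in> F\<close> FB by auto
    ultimately show False using bij unfolding bij_betw_def inj_on_def by blast
  qed
  moreover have "?c \<in> Field r" using CF Ceq by auto
  moreover have "inGap r F (\<lambda>x. (Some x, None) \<in> B) ?c"
    unfolding inGap_def
  proof
    fix x assume "x \<in> F"
    then have "Some x \<in> Field B" "None \<in> Field B" using FB by auto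
    then show "((x, ?c) \<in> r) = ((Some x, None) \<in> B)" using ord hfix \<open>x \<in> F\<close> by metis
  qed
  ultimately show "\<exists>c. c \<in> Field r - F \<and> C = insert c F \<and> inGap r F (\<lambda>x. (Some x, None) \<in> B) c"
    using Ceq by blast
next
  have FB: "Field B = insert None (Some ` F)" using B by (simp add: prime_ext_def)
  have BL: "Linear_order B" using B unfolding prime_ext_def by blast
  have Bord: "\<forall>a\<in>F. \<forall>b\<in>F. (Some a, Some b) \<in> B \<longleftrightarrow> (a, b) \<in> r" using B by (simp add: prime_ext_def)
  assume "\<exists>c. c \<in> Field r - F \<and> C = insert c F \<and> inGap r F (\<lambda>x. (Some x, None) \<in> B) c"
  then obtain c where c: "c \<in> Field r" "c \<notin> F" and C: "C = insert c F"
    and g: "\<forall>x\<in>F. ((x,c) \<in> r \<longleftrightarrow> (Some x, None) \<in> B)" unfolding inGap_def by blast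
  define h where "h = (\<lambda>z. case z of None \<Rightarrow> c | Some x \<Rightarrow> x)"
  have rB: "refl_on (Field B) B" "antisym B" "total_on (Field B) B"
    using BL by (auto simp: order_on_defs)
  have rr: "refl_on (Field r) r" "antisym r" "total_on (Field r) r"
    using r by (auto simp: order_on_defs)
  have "bij_betw h (Field B) C"
    unfolding bij_betw_def inj_on_def FB C h_def using c by (auto simp: image_image)
  moreover have "\<forall>a\<in>F. h (Some a) = a" by (simp add: h_def)
  moreover have "\<forall>x\<in>Field B. \<forall>y\<in>Field B. (x, y) \<in> B \<longleftrightarrow> (h x, h y) \<in> r"
  proof (intro ballI)
    fix x y assume x: "x \<in> Field B" and y: "y \<in> Field B"
    show "(x, y) \<in> B \<longleftrightarrow> (h x, h y) \<in> r"
    proof (cases x; cases y)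
      assume "x = None" "y = None" then show ?thesis using x rB rr c
        by (auto simp: h_def refl_on_def)
    next
      fix b assume xy: "x = None" "y = Some b"
      then have b: "b \<in> F" "b \<noteq> c" using y FB c by auto
      have "(None, Some b) \<in> B \<longleftrightarrow> (Some b, None) \<notin> B"
        using rB x y xy unfolding total_on_def antisym_def by auto
      moreover have "(c, b) \<in> r \<longleftrightarrow> (b, c) \<notin> r"
        using rr c b F unfolding total_on_def antisym_def by auto
      ultimately show ?thesis using xy g b by (simp add: h_def)
    next
      fix a assume xy: "x = Some a" "y = None"
      then have a: "a \<in> F" using x FB by auto
      then show ?thesis using xy g by (simp add: h_def)
    next
      fix a b assume xy: "x = Some a" "y = Some b"
      then have "a \<in> F" "b \<in> F" using x y FB by auto
      then show ?thesis using xy Bord by (simp add: h_def)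
    qed
  qed
  moreover have "F \<subseteq> C" "C \<subseteq> Field r" using C c F by auto
  ultimately show "realization r F B C" unfolding realization_def by blast
qed

lemma cut_prime:
  assumes r: "Linear_order r" and F: "F \<subseteq> Field r" and P: "cutp r F P"
  shows "\<exists>B. prime_ext r F B \<and> (\<forall>x\<in>F. (Some x, None) \<in> B \<longleftrightarrow> P x)"
proof -
  define D where "D = insert None (Some ` F)"
  define B where "B = {(u,v). u \<in> D \<and> v \<in> D \<and>
     (case (u,v) of (Some x, Some y) \<Rightarrow> (x,y) \<in> r | (Some x, None) \<Rightarrow> P x
        | (None, Some y) \<Rightarrow> \<not> P y | (None, None) \<Rightarrow> True)}"
  have rr: "refl_on (Field r) r" "antisym r" "total_on (Field r) r" "trans r"
    using r by (auto simp: order_on_defs)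
  have FB: "Field B = D"
  proof
    show "Field B \<subseteq> D" unfolding B_def Field_def by auto
    show "D \<subseteq> Field B"
    proof
      fix u assume "u \<in> D"
      then have "(u,u) \<in> B" unfolding B_def D_def using rr F
        by (cases u) (auto simp: refl_on_def)
      then show "u \<in> Field B" by (auto simp: Field_def)
    qed
  qed
  have Bi: "(u,v) \<in> B \<longleftrightarrow> u \<in> D \<and> v \<in> D \<and> (case (u,v) of (Some x, Some y) \<Rightarrow> (x,y) \<in> r | (Some x, None) \<Rightarrow> P x
        | (None, Some y) \<Rightarrow> \<not> P y | (None, None) \<Rightarrow> True)" for u v
    unfolding B_def by simp
  have cutP: "\<And>x y. x \<in> F \<Longrightarrow> y \<in> F \<Longrightarrow> (x,y) \<in> r \<Longrightarrow> P y \<Longrightarrow> P x"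
    using P unfolding cutp_def by blast
  have totr: "\<And>x y. x \<in> F \<Longrightarrow> y \<in> F \<Longrightarrow> x \<noteq> y \<Longrightarrow> (x,y) \<in> r \<or> (y,x) \<in> r"
    using rr(3) F unfolding total_on_def by blast
  have reflr: "\<And>x. x \<in> F \<Longrightarrow> (x,x) \<in> r" using rr(1) F unfolding refl_on_def by blast
  have transr: "\<And>x y z. (x,y) \<in> r \<Longrightarrow> (y,z) \<in> r \<Longrightarrow> (x,z) \<in> r" using rr(4) by (meson transD)
  have antir: "\<And>x y. (x,y) \<in> r \<Longrightarrow> (y,x) \<in> r \<Longrightarrow> x = y" using rr(2) by (meson antisymD)
  have "refl_on (Field B) B"
    unfolding FB refl_on_def
  proof
    fix u assume "u \<in> D" then show "(u,u) \<in> B"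
      by (cases u) (auto simp: Bi D_def reflr)
  qed
  moreover have "trans B"
  proof (rule transI)
    fix u v w assume uv: "(u,v) \<in> B" and vw: "(v,w) \<in> B"
    have D: "u \<in> D" "w \<in> D" using uv vw by (auto simp: Bi)
    show "(u,w) \<in> B"
    proof (cases u)
      case None
      then show ?thesis
      proof (cases w)
        case (Some z)
        then show ?thesis using None uv vw D
          apply (cases v)
          subgoal by (simp add: Bi)
          subgoal for y by (simp add: Bi D_def) (metis cutP image_iff option.inject)
          done
      qed (use D in \<open>simp add: Bi\<close>)
    next
      case (Some x)
      then have x: "x \<in> F" using D by (auto simp: D_def)
      show ?thesis
      proof (cases w)
        case None
        then show ?thesis using Some uv vw D x
          apply (cases v)
          subgoal by (simp add: Bi)
          subgoal for y by (simp add: Bi D_def) (metis cutP image_iff option.inject)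
          done
      next
        fix z assume Some2: "w = Some z"
        then have z: "z \<in> F" using D by (auto simp: D_def)
        show ?thesis
        proof (cases v)
          case None
          then have "P x" "\<not> P z" using uv vw Some Some2 by (auto simp: Bi)
          then have "(x,z) \<in> r" using totr[OF x z] cutP[OF z x] by blast
          then show ?thesis using Some Some2 D by (simp add: Bi)
        next
          case (Some y)
          then show ?thesis using uv vw \<open>u = Some x\<close> Some2 D by (auto simp: Bi intro: transr)
        qed
      qed
    qed
  qed
  moreover have "antisym B"
  proof (rule antisymI)
    fix u v assume uv: "(u,v) \<in> B" and vu: "(v,u) \<in> B"
    show "u = v"
    proof (cases u; cases v)
      fix x y assume "u = Some x" "v = Some y" then show ?thesis using uv vu by (auto simp: Bi intro: antir)
    qed (use uv vu in \<open>auto simp: Bi\<close>)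
  qed
  moreover have "total_on (Field B) B"
    unfolding FB total_on_def
  proof (intro ballI impI)
    fix u v assume u: "u \<in> D" and v: "v \<in> D" and ne: "u \<noteq> v"
    show "(u,v) \<in> B \<or> (v,u) \<in> B"
    proof (cases u; cases v)
      fix x y assume "u = Some x" "v = Some y" then show ?thesis using u v ne totr by (auto simp: Bi D_def)
    qed (use u v ne in \<open>auto simp: Bi\<close>)
  qed
  ultimately have LB: "Linear_order B" by (auto simp: order_on_defs intro: FieldI1 FieldI2)
  have o1: "\<forall>a\<in>F. \<forall>b\<in>F. (Some a, Some b) \<in> B \<longleftrightarrow> (a, b) \<in> r"
    by (auto simp: Bi D_def)
  have o2: "\<forall>x\<in>F. (Some x, None) \<in> B \<longleftrightarrow> P x" by (auto simp: Bi D_def)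
  have "prime_ext r F B" unfolding prime_ext_def using LB o1 FB D_def by blast
  then show ?thesis using o2 by blast
qed


theorem framework:
  fixes r :: "'a rel" and Ref :: "'q rel" and W :: "'c rel" and R :: "'a set \<Rightarrow> 'q"
  assumes r: "Linear_order r" and Ref: "Well_order Ref" and W: "Well_order W"
   and RF: "\<And>F. finite F \<Longrightarrow> F \<subseteq> Field r \<Longrightarrow> R F \<in> Field Ref"
   and A: "\<And>F P q. finite F \<Longrightarrow> F \<subseteq> Field r \<Longrightarrow> cutp r F P \<Longrightarrow> (q, R F) \<in> Ref \<Longrightarrow> q \<noteq> R F \<Longrightarrow>
             \<exists>c \<in> Field r - F. inGap r F P c \<and> (q, R (insert c F)) \<in> Ref"
   and B: "\<And>F. finite F \<Longrightarrow> F \<subseteq> Field r \<Longrightarrow> \<exists>P. cutp r F P \<and>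
             (\<forall>c \<in> Field r - F. inGap r F P c \<longrightarrow> (R (insert c F), R F) \<in> Ref \<and> R (insert c F) \<noteq> R F)"
  shows "finite F \<Longrightarrow> F \<subseteq> Field r \<Longrightarrow> rk_ge_at r W w F \<longleftrightarrow> SW W w \<le>o SW Ref (R F)"
proof -
  have wfW: "wf (W - Id)" using W by (simp add: order_on_defs)
  have Wlin: "antisym W" "total_on (Field W) W" "trans W" using W by (auto simp: order_on_defs)
  have WOZ: "\<And>q. Well_order (SW Ref q)" using SW_WO[OF Ref] .
  have WOW: "\<And>q. Well_order (SW W q)" using SW_WO[OF W] .
  show "finite F \<Longrightarrow> F \<subseteq> Field r \<Longrightarrow> rk_ge_at r W w F \<longleftrightarrow> SW W w \<le>o SW Ref (R F)"
  proof (induction w arbitrary: F rule: wf_induct[OF wfW])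
    case (1 w F)
    note IH = "1.IH" and fin = "1.prems"(1) and FS = "1.prems"(2)
    let ?Z = "SW Ref (R F)"
    show ?case
    proof (cases "\<forall>v. (v, w) \<notin> W - Id")
      case True
      then show ?thesis using rk_ge_at_unfold[OF wfW, of r w F] SW_zero[OF WOZ True] by simp
    next
      case notzero: False
      show ?thesis
      proof (cases "\<exists>v. (v, w) \<in> W - Id \<and> (\<forall>u. (u, w) \<in> W - Id \<longrightarrow> (u, v) \<in> W)")
        case True
        then obtain v where v: "(v, w) \<in> W - Id" and vmax: "\<forall>u. (u, w) \<in> W - Id \<longrightarrow> (u, v) \<in> W" by blast
        have uniq: "\<And>v'. (v', w) \<in> W - Id \<Longrightarrow> (\<forall>u. (u, w) \<in> W - Id \<longrightarrow> (u, v') \<in> W) \<Longrightarrow> v' = v"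
          using v vmax Wlin(1) by (meson antisymD)
        have lhs: "rk_ge_at r W w F \<longleftrightarrow>
            (\<forall>rB. prime_ext r F rB \<longrightarrow> (\<exists>C. realization r F rB C \<and> rk_ge_at r W v C))"
          using rk_ge_at_unfold[OF wfW, of r w F] notzero True uniq v vmax by (smt (verit))
        have IHv: "\<And>C. finite C \<Longrightarrow> C \<subseteq> Field r \<Longrightarrow> rk_ge_at r W v C \<longleftrightarrow> SW W v \<le>o SW Ref (R C)"
          using IH v by blast
        show ?thesis
        proof
          assume L: "rk_ge_at r W w F"
          obtain P where P: "cutp r F P" and
            Pdec: "\<forall>c \<in> Field r - F. inGap r F P c \<longrightarrow> (R (insert c F), R F) \<in> Ref \<and> R (insert c F) \<noteq> R F"
            using B[OF fin FS] by blast
          obtain B0 where B0: "prime_ext r F B0" and B0P: "\<forall>x\<in>F. (Some x, None) \<in> B0 \<longleftrightarrow> P x"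
            using cut_prime[OF r FS P] by blast
          obtain C where C: "realization r F B0 C" and rkC: "rk_ge_at r W v C" using L lhs B0 by blast
          obtain c where c: "c \<in> Field r - F" "C = insert c F" and g: "inGap r F (\<lambda>x. (Some x, None) \<in> B0) c"
            using C realization_iff[OF r FS B0] by blast
          have gP: "inGap r F P c" using g B0P unfolding inGap_def by blast
          have "SW W v \<le>o SW Ref (R C)" using rkC IHv c fin FS by auto
          moreover have "SW Ref (R C) <o ?Z" using Pdec c gP SW_strict[OF Ref] by blast
          ultimately have vZ: "SW W v <o ?Z" using ordLeq_ordLess_trans by blast
          show "SW W w \<le>o ?Z"
          proof (rule ccontr)
            assume "\<not> SW W w \<le>o ?Z"
            then have "?Z <o SW W w" using not_ordLeq_iff_ordLess[OF WOZ WOW] by blast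
            then obtain u where u: "(u, w) \<in> W" "u \<noteq> w" and Zu: "?Z =o SW W u"
              using SW_below[OF W WOZ] by blast
            have "(u, v) \<in> W" using vmax u by blast
            then have "SW W u \<le>o SW W v" using SW_mono[OF W] by blast
            then have "?Z \<le>o SW W v" using Zu ordIso_ordLeq_trans by blast
            then have "?Z <o ?Z" using vZ ordLeq_ordLess_trans by blast
            then show False using ordLess_irreflexive by blast
          qed
        next
          assume Rgt: "SW W w \<le>o ?Z"
          have "SW W v <o SW W w" using v SW_strict[OF W] by blast
          then have vZ: "SW W v <o ?Z" using Rgt ordLess_ordLeq_trans by blast
          obtain q where q: "(q, R F) \<in> Ref" "q \<noteq> R F" and vq: "SW W v =o SW Ref q"
            using SW_below[OF Ref WOW vZ] by blast
          have "\<forall>rB. prime_ext r F rB \<longrightarrow> (\<exists>C. realization r F rB C \<and> rk_ge_at r W v C)"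
          proof (intro allI impI)
            fix rB assume rB: "prime_ext r F rB"
            have P: "cutp r F (\<lambda>x. (Some x, None) \<in> rB)" using prime_cut[OF rB] .
            obtain c where c: "c \<in> Field r - F" and g: "inGap r F (\<lambda>x. (Some x, None) \<in> rB) c"
              and qc: "(q, R (insert c F)) \<in> Ref"
              using A[OF fin FS P q] by blast
            have "SW Ref q \<le>o SW Ref (R (insert c F))" using SW_mono[OF Ref qc] .
            then have "SW W v \<le>o SW Ref (R (insert c F))" using vq ordIso_ordLeq_trans by blast
            then have "rk_ge_at r W v (insert c F)" using IHv fin FS c by auto
            moreover have "realization r F rB (insert c F)" using realization_iff[OF r FS rB] c g by blast
            ultimately show "\<exists>C. realization r F rB C \<and> rk_ge_at r W v C" by blast
          qed
          then show "rk_ge_at r W w F" using lhs by blast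
        qed
      next
        case nosucc: False
        have lhs: "rk_ge_at r W w F \<longleftrightarrow> (\<forall>v. (v, w) \<in> W - Id \<longrightarrow> rk_ge_at r W v F)"
          using rk_ge_at_unfold[OF wfW, of r w F] notzero nosucc by (simp only: if_False)
        also have "\<dots> \<longleftrightarrow> (\<forall>v. (v, w) \<in> W - Id \<longrightarrow> SW W v \<le>o ?Z)"
          using IH fin FS by blast
        also have "\<dots> \<longleftrightarrow> SW W w \<le>o ?Z"
        proof
          assume all: "\<forall>v. (v, w) \<in> W - Id \<longrightarrow> SW W v \<le>o ?Z"
          show "SW W w \<le>o ?Z"
          proof (rule ccontr)
            assume "\<not> SW W w \<le>o ?Z"
            then have "?Z <o SW W w" using not_ordLeq_iff_ordLess[OF WOZ WOW] by blast
            then obtain u where u: "(u, w) \<in> W" "u \<noteq> w" and Zu: "?Z =o SW W u"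
              using SW_below[OF W WOZ] by blast
            obtain u' where u': "(u', w) \<in> W - Id" "(u', u) \<notin> W" using nosucc u by blast
            have "u \<in> Field W" "u' \<in> Field W" using u u' by (auto intro: FieldI1)
            moreover have "(u', u') \<in> W" using \<open>u' \<in> Field W\<close> W by (auto simp: order_on_defs refl_on_def)
            ultimately have "(u, u') \<in> W" "u \<noteq> u'" using Wlin(2) u'(2) unfolding total_on_def by metis+
            then have "SW W u <o SW W u'" using SW_strict[OF W] by blast
            moreover have "SW W u' \<le>o ?Z" using all u' by blast
            ultimately have "SW W u <o ?Z" using ordLess_ordLeq_trans by blast
            then have "?Z <o ?Z" using Zu ordIso_ordLess_trans by blast
            then show False using ordLess_irreflexive by blast
          qed
        next
          assume "SW W w \<le>o ?Z"
          then show "\<forall>v. (v, w) \<in> W - Id \<longrightarrow> SW W v \<le>o ?Z"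
            using SW_mono[OF W] ordLeq_transitive by blast
        qed
        finally show ?thesis .
      qed
    qed
  qed
qed


lemma le_floor_log_iff: "n > 0 \<Longrightarrow> i \<le> floor_log n \<longleftrightarrow> 2 ^ i \<le> n"
proof
  assume "n > 0" "i \<le> floor_log n"
  then have "(2::nat) ^ i \<le> 2 ^ floor_log n" by (simp add: power_increasing)
  then show "2 ^ i \<le> n" using floor_log_exp2_le[of n] \<open>n > 0\<close> by linarith
next
  assume "2 ^ i \<le> n"
  then show "i \<le> floor_log n" using floor_log_le_iff[of "2^i" n] by simp
qed

lemma floor_log_split:
  assumes "n1 > 0" "n2 > 0"
  shows "floor_log n1 < floor_log (n1 + n2) \<or> floor_log n2 < floor_log (n1 + n2)"
proof (rule ccontr)
  let ?k = "floor_log (n1 + n2)"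
  assume "\<not> ?thesis"
  then have "?k \<le> floor_log n1" "?k \<le> floor_log n2" by auto
  then have "2 ^ ?k \<le> n1" "2 ^ ?k \<le> n2" using le_floor_log_iff assms by blast+
  then have "2 * 2 ^ ?k \<le> n1 + n2" by simp
  then show False using floor_log_exp2_gt[of "n1 + n2"] by simp
qed

definition supp :: "('t \<Rightarrow> nat) \<Rightarrow> 't set" where "supp f = {x. f x \<noteq> 0}"

definition FS :: "'t rel \<Rightarrow> ('t \<Rightarrow> nat) set" where
  "FS L = {f. finite (supp f) \<and> supp f \<subseteq> Field L}"

definition lexless :: "'t rel \<Rightarrow> ('t \<Rightarrow> nat) \<Rightarrow> ('t \<Rightarrow> nat) \<Rightarrow> bool" where
  "lexless L f g \<longleftrightarrow> (\<exists>x. f x < g x \<and> (\<forall>y. (x,y) \<in> L \<and> y \<noteq> x \<longrightarrow> f y = g y))"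

definition td :: "'t rel \<Rightarrow> ('t \<Rightarrow> nat) \<Rightarrow> ('t \<Rightarrow> nat) \<Rightarrow> 't" where
  "td L f g = (SOME x. x \<in> Field L \<and> f x \<noteq> g x \<and> (\<forall>y. f y \<noteq> g y \<longrightarrow> (y,x) \<in> L))"

lemma finite_max_lin:
  assumes L: "Linear_order L" and fin: "finite D" and ne: "D \<noteq> {}" and sub: "D \<subseteq> Field L"
  shows "\<exists>x\<in>D. \<forall>y\<in>D. (y,x) \<in> L"
  using fin ne sub
proof (induction D rule: finite_ne_induct)
  case (singleton x)
  then show ?case using L by (auto simp: order_on_defs refl_on_def)
next
  case (insert z D)
  then obtain x where x: "x \<in> D" "\<forall>y\<in>D. (y,x) \<in> L" by auto
  have tot: "total_on (Field L) L" and tr: "trans L" and rf: "refl_on (Field L) L"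
    using L by (auto simp: order_on_defs)
  have "z \<in> Field L" "x \<in> Field L" using insert x by auto
  then have "(z,x) \<in> L \<or> (x,z) \<in> L" using tot rf by (cases "z = x") (auto simp: total_on_def refl_on_def)
  then show ?case
  proof
    assume "(z,x) \<in> L" then show ?thesis using x by auto
  next
    assume xz: "(x,z) \<in> L"
    have "\<forall>y\<in>insert z D. (y,z) \<in> L"
      using x xz tr rf \<open>z \<in> Field L\<close> by (auto dest: transD simp: refl_on_def)
    then show ?thesis by auto
  qed
qed

locale wlin =
  fixes L :: "'t rel"
  assumes WL: "Well_order L"
begin

lemma LL: "Linear_order L" using WL by (simp add: order_on_defs)
lemma Ltrans: "(x,y) \<in> L \<Longrightarrow> (y,z) \<in> L \<Longrightarrow> (x,z) \<in> L"
  using WL by (auto simp: order_on_defs dest: transD)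
lemma Lanti: "(x,y) \<in> L \<Longrightarrow> (y,x) \<in> L \<Longrightarrow> x = y"
  using WL by (auto simp: order_on_defs dest: antisymD)
lemma Ltot: "x \<in> Field L \<Longrightarrow> y \<in> Field L \<Longrightarrow> (x,y) \<in> L \<or> (y,x) \<in> L"
  using WL by (cases "x = y") (auto simp: order_on_defs total_on_def refl_on_def)
lemma Lrefl: "x \<in> Field L \<Longrightarrow> (x,x) \<in> L"
  using WL by (auto simp: order_on_defs refl_on_def)

lemma supp_FS: "f \<in> FS L \<Longrightarrow> f x \<noteq> 0 \<Longrightarrow> x \<in> Field L"
  by (auto simp: FS_def supp_def)

lemma diff_Field: "f \<in> FS L \<Longrightarrow> g \<in> FS L \<Longrightarrow> f x \<noteq> g x \<Longrightarrow> x \<in> Field L"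
  using supp_FS by (metis)

lemma td_prop:
  assumes f: "f \<in> FS L" and g: "g \<in> FS L" and ne: "f \<noteq> g"
  shows "td L f g \<in> Field L \<and> f (td L f g) \<noteq> g (td L f g) \<and> (\<forall>y. f y \<noteq> g y \<longrightarrow> (y, td L f g) \<in> L)"
proof -
  let ?D = "{x. f x \<noteq> g x}"
  have "?D \<subseteq> supp f \<union> supp g" by (auto simp: supp_def)
  then have fin: "finite ?D" using f g by (auto simp: FS_def intro: finite_subset)
  have ne': "?D \<noteq> {}" using ne by auto
  have sub: "?D \<subseteq> Field L" using diff_Field f g by blast
  obtain x where "x \<in> ?D" "\<forall>y\<in>?D. (y,x) \<in> L" using finite_max_lin[OF LL fin ne' sub] by blast
  then have "\<exists>x. x \<in> Field L \<and> f x \<noteq> g x \<and> (\<forall>y. f y \<noteq> g y \<longrightarrow> (y,x) \<in> L)" using sub by blast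
  then show ?thesis unfolding td_def by (rule someI_ex)
qed

lemma td_sym: "td L f g = td L g f"
  unfolding td_def by (metis)

lemma td_eqI:
  assumes f: "f \<in> FS L" and g: "g \<in> FS L" and d: "f x \<noteq> g x"
    and above: "\<forall>y. (x,y) \<in> L \<and> y \<noteq> x \<longrightarrow> f y = g y"
  shows "td L f g = x"
proof -
  have ne: "f \<noteq> g" using d by auto
  note tp = td_prop[OF f g ne]
  have "(x, td L f g) \<in> L" using tp d by blast
  then show ?thesis using above tp by metis
qed

lemma td_above:
  assumes f: "f \<in> FS L" and g: "g \<in> FS L" and ne: "f \<noteq> g"
  shows "\<forall>y. (td L f g, y) \<in> L \<and> y \<noteq> td L f g \<longrightarrow> f y = g y"
  using td_prop[OF f g ne] Lanti by metis

lemma lexless_td: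
  assumes f: "f \<in> FS L" and g: "g \<in> FS L"
  shows "lexless L f g \<longleftrightarrow> f \<noteq> g \<and> f (td L f g) < g (td L f g)"
proof
  assume "lexless L f g"
  then obtain x where x: "f x < g x" "\<forall>y. (x,y) \<in> L \<and> y \<noteq> x \<longrightarrow> f y = g y"
    unfolding lexless_def by blast
  then have "td L f g = x" using td_eqI[OF f g] by simp
  then show "f \<noteq> g \<and> f (td L f g) < g (td L f g)" using x by auto
next
  assume "f \<noteq> g \<and> f (td L f g) < g (td L f g)"
  then show "lexless L f g" unfolding lexless_def using td_above[OF f g] by blast
qed

lemma lexless_irrefl: "\<not> lexless L f f"
  unfolding lexless_def by auto

lemma lexless_asym:
  assumes f: "f \<in> FS L" and g: "g \<in> FS L" and "lexless L f g"
  shows "\<not> lexless L g f"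
  using assms lexless_td[OF f g] lexless_td[OF g f] td_sym[of f g] by auto

lemma lexless_trans:
  assumes f: "f \<in> FS L" and g: "g \<in> FS L" and h: "h \<in> FS L"
    and fg: "lexless L f g" and gh: "lexless L g h"
  shows "lexless L f h"
proof -
  obtain x where x: "f x < g x" "\<forall>y. (x,y) \<in> L \<and> y \<noteq> x \<longrightarrow> f y = g y"
    using fg unfolding lexless_def by blast
  obtain z where z: "g z < h z" "\<forall>y. (z,y) \<in> L \<and> y \<noteq> z \<longrightarrow> g y = h y"
    using gh unfolding lexless_def by blast
  have xF: "x \<in> Field L" using supp_FS[OF g, of x] x by simp
  have zF: "z \<in> Field L" using supp_FS[OF h, of z] z by simp
  consider "x = z" | "(x,z) \<in> L" "x \<noteq> z" | "(z,x) \<in> L" "x \<noteq> z" using Ltot[OF xF zF] by blast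
  then show ?thesis
  proof cases
    case 1 then show ?thesis using x z unfolding lexless_def by (metis order.strict_trans)
  next
    case 2
    have "f z < h z" using x(2) 2 z(1) by simp
    moreover have "\<forall>y. (z,y) \<in> L \<and> y \<noteq> z \<longrightarrow> f y = h y"
      using x(2) z(2) 2 Ltrans Lanti by metis
    ultimately show ?thesis unfolding lexless_def by blast
  next
    case 3
    have "f x < h x" using x(1) z(2) 3 by simp
    moreover have "\<forall>y. (x,y) \<in> L \<and> y \<noteq> x \<longrightarrow> f y = h y"
      using x(2) z(2) 3 Ltrans Lanti by metis
    ultimately show ?thesis unfolding lexless_def by blast
  qed
qed

lemma lexless_total:
  assumes f: "f \<in> FS L" and g: "g \<in> FS L"
  shows "f = g \<or> lexless L f g \<or> lexless L g f"
  using lexless_td[OF f g] lexless_td[OF g f] td_sym[of f g] td_prop[OF f g] by (metis nat_neq_iff)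

lemma zero_FS: "(\<lambda>_. 0) \<in> FS L" by (simp add: FS_def supp_def)

lemma zero_le: "f \<in> FS L \<Longrightarrow> f \<noteq> (\<lambda>_. 0) \<Longrightarrow> lexless L (\<lambda>_. 0) f"
  using lexless_td[OF zero_FS, of f] td_prop[OF zero_FS, of f] by auto

lemma not_lexless_zero: "\<not> lexless L f (\<lambda>_. 0)"
  unfolding lexless_def by auto

end


locale wlin0 = wlin +
  fixes x0 :: 't
  assumes x0F: "x0 \<in> Field L" and x0min: "\<And>y. y \<in> Field L \<Longrightarrow> (x0, y) \<in> L"
begin

definition lo :: "('t \<Rightarrow> nat) option \<Rightarrow> 't \<Rightarrow> nat" where
  "lo a = (case a of None \<Rightarrow> (\<lambda>_. 0) | Some f \<Rightarrow> f)"

definition ex :: "('t \<Rightarrow> nat) option \<Rightarrow> 't \<Rightarrow> nat" where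
  "ex a t = (if a = None \<and> t = x0 then 1 else 0)"

definition rho :: "('t \<Rightarrow> nat) option \<Rightarrow> ('t \<Rightarrow> nat) \<Rightarrow> 't \<times> nat" where
  "rho a b = (if lo a = b then (x0, 0) else
     (td L (lo a) b, floor_log (b (td L (lo a) b) - lo a (td L (lo a) b) + ex a (td L (lo a) b))))"

definition below :: "('t \<Rightarrow> nat) option \<Rightarrow> ('t \<Rightarrow> nat) \<Rightarrow> bool" where
  "below a c \<longleftrightarrow> (case a of None \<Rightarrow> True | Some f \<Rightarrow> lexless L f c)"

lemma Ref_iff: "((b,n),(c,p)) \<in> omega_times L \<longleftrightarrow>
   b \<in> Field L \<and> c \<in> Field L \<and> ((b,c) \<in> L \<and> b \<noteq> c \<or> b = c \<and> n \<le> p)"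
  by (simp add: omega_times_def)

lemma WRef: "Well_order (omega_times L)" using Well_order_omega_times[OF WL] .

lemma FRef: "Field (omega_times L) = Field L \<times> UNIV"
proof -
  have "Refl L" using WL by (simp add: order_on_defs)
  then show ?thesis by (rule Field_omega_times)
qed

lemma lo_FS: "lo a \<in> FS L \<longleftrightarrow> (case a of None \<Rightarrow> True | Some f \<Rightarrow> f \<in> FS L)"
  by (cases a) (auto simp: lo_def zero_FS)

lemma rho_Field: "lo a \<in> FS L \<Longrightarrow> b \<in> FS L \<Longrightarrow> rho a b \<in> Field (omega_times L)"
  using td_prop[of "lo a" b] x0F unfolding rho_def FRef by auto

lemma bot_le: "p \<in> Field (omega_times L) \<Longrightarrow> ((x0, 0), p) \<in> omega_times L"
  using x0F x0min unfolding FRef by (cases p) (auto simp: Ref_iff)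

lemma rho_td:
  assumes "lo a \<in> FS L" "b \<in> FS L" "lo a x \<noteq> b x" "\<forall>y. (x,y) \<in> L \<and> y \<noteq> x \<longrightarrow> lo a y = b y"
  shows "rho a b = (x, floor_log (b x - lo a x + ex a x))"
  using td_eqI[OF assms] assms(3) unfolding rho_def by auto

lemma rho_Some_td:
  assumes "c \<in> FS L" "b \<in> FS L" "c x \<noteq> b x" "\<forall>y. (x,y) \<in> L \<and> y \<noteq> x \<longrightarrow> c y = b y"
  shows "rho (Some c) b = (x, floor_log (b x - c x))"
  using rho_td[of "Some c" b x] assms by (simp add: lo_def ex_def)

lemma rhoB:
  assumes fa: "lo a \<in> FS L" and b: "b \<in> FS L" and c: "c \<in> FS L"
    and ac: "below a c" and cb: "lexless L c b"
  shows "((rho a c, rho a b) \<in> omega_times L \<and> rho a c \<noteq> rho a b) \<or>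
         ((rho (Some c) b, rho a b) \<in> omega_times L \<and> rho (Some c) b \<noteq> rho a b)"
proof -
  define f where "f = lo a"
  have f: "f \<in> FS L" using fa f_def by simp
  have fc: "f = c \<or> lexless L f c"
    using ac zero_le[OF c] unfolding below_def f_def lo_def by (cases a) auto
  have fb: "lexless L f b" using fc cb lexless_trans[OF f c b] by auto
  have fneb: "f \<noteq> b" using fb lexless_irrefl by auto
  define x where "x = td L f b"
  have xF: "x \<in> Field L" and fxbx: "f x < b x" using fb lexless_td[OF f b] td_prop[OF f b fneb] x_def by auto
  have fbabove: "\<forall>y. (x,y) \<in> L \<and> y \<noteq> x \<longrightarrow> f y = b y" using td_above[OF f b fneb] x_def by simp
  have notcf: "\<not> lexless L c f"
    using fc lexless_asym[OF f c] lexless_irrefl by auto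
  have cbabove: "\<forall>y. (x,y) \<in> L \<and> y \<noteq> x \<longrightarrow> c y = b y"
  proof (intro allI impI)
    fix y assume y: "(x,y) \<in> L \<and> y \<noteq> x"
    show "c y = b y"
    proof (rule ccontr)
      assume ne: "c y \<noteq> b y"
      have cneb: "c \<noteq> b" using ne by auto
      define z where "z = td L c b"
      have yz: "(y, z) \<in> L" using td_prop[OF c b cneb] ne z_def by auto
      have xz: "(x, z) \<in> L" using Ltrans y yz by blast
      have zx: "z \<noteq> x" using yz y Lanti by blast
      have czbz: "c z < b z" using cb lexless_td[OF c b] z_def by simp
      have "f z = b z" using fbabove xz zx by blast
      moreover have "\<forall>u. (z,u) \<in> L \<and> u \<noteq> z \<longrightarrow> c u = f u"
      proof (intro allI impI)
        fix u assume u: "(z,u) \<in> L \<and> u \<noteq> z"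
        have "c u = b u" using td_above[OF c b cneb] u z_def by simp
        moreover have "(x,u) \<in> L" "u \<noteq> x" using Ltrans xz u Lanti zx by blast+
        ultimately show "c u = f u" using fbabove by simp
      qed
      ultimately have "lexless L c f" unfolding lexless_def using czbz by (metis)
      then show False using notcf by simp
    qed
  qed
  have cxbx: "c x \<le> b x"
  proof (rule ccontr)
    assume "\<not> c x \<le> b x"
    then have "lexless L b c" unfolding lexless_def using cbabove by (metis not_le)
    then show False using lexless_asym[OF c b cb] by simp
  qed
  have fxcx: "f x \<le> c x"
  proof (rule ccontr)
    assume "\<not> f x \<le> c x"
    then have "lexless L c f" unfolding lexless_def using cbabove fbabove by (metis not_le)
    then show False using notcf by simp
  qed
  have rab: "rho a b = (x, floor_log (b x - f x + ex a x))"
    using rho_td[of a b x] fa b fxbx fbabove f_def by simp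
  have cfabove: "\<forall>y. (x,y) \<in> L \<and> y \<noteq> x \<longrightarrow> c y = f y" using cbabove fbabove by simp
  consider "c x = b x" | "c x = f x" | "f x < c x" "c x < b x" using cxbx fxcx fxbx by linarith
  then show ?thesis
  proof cases
    case 1
    have rac: "rho a c = rho a b"
      using rho_td[of a c x] fa c fxbx 1 cfabove f_def rab by (simp add: eq_commute)
    have cneb: "c \<noteq> b" using cb lexless_irrefl by auto
    define z where "z = td L c b"
    have zp: "z \<in> Field L" "c z \<noteq> b z" using td_prop[OF c b cneb] z_def by auto
    have zx: "z \<noteq> x" using zp 1 by auto
    have "\<not> ((x,z) \<in> L)" using zp zx cbabove by blast
    then have "(z,x) \<in> L" using Ltot[OF zp(1) xF] by blast
    moreover have "rho (Some c) b = (z, floor_log (b z - c z))"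
      using rho_Some_td[OF c b zp(2)] td_above[OF c b cneb] z_def by simp
    ultimately show ?thesis using rab zx zp xF by (simp add: Ref_iff)
  next
    case 2
    have "c x \<noteq> b x" using 2 fxbx by simp
    then have "rho (Some c) b = (x, floor_log (b x - c x))"
      using rho_Some_td[OF c b _ cbabove] by blast
    show ?thesis
    proof (cases "f = c")
      case True
      then have aN: "a = None" using fc lexless_irrefl ac unfolding below_def f_def lo_def
        by (cases a) auto
      then have f0: "f = (\<lambda>_. 0)" by (simp add: f_def lo_def)
      have rac: "rho a c = (x0, 0)" using True by (simp add: rho_def f_def)
      have "rho a c \<noteq> rho a b"
      proof (cases "x = x0")
        case True
        then have "ex a x = 1" using aN by (simp add: ex_def)
        then have "b x - f x + ex a x \<ge> 2" using fxbx f0 by simp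
        then have "floor_log (b x - f x + ex a x) \<ge> 1" using le_floor_log_iff[of "b x - f x + ex a x" 1] fxbx by simp
        then show ?thesis using rac rab by simp
      next
        case False
        then show ?thesis using rac rab by simp
      qed
      moreover have "(rho a c, rho a b) \<in> omega_times L"
        using rac bot_le rho_Field fa b by simp
      ultimately show ?thesis by blast
    next
      case False
      define z where "z = td L f c"
      have zp: "z \<in> Field L" "f z \<noteq> c z" using td_prop[OF f c False] z_def by auto
      have zx: "z \<noteq> x" using zp 2 by auto
      have "\<not> ((x,z) \<in> L)" using zp zx cfabove by metis
      then have zxL: "(z,x) \<in> L" using Ltot[OF zp(1) xF] by blast
      have "rho a c = (z, floor_log (c z - f z + ex a z))"
        using rho_td[of a c z] fa c zp td_above[OF f c False] z_def f_def by simp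
      then show ?thesis using rab zx zp xF zxL by (simp add: Ref_iff)
    qed
  next
    case 3
    have rac: "rho a c = (x, floor_log (c x - f x + ex a x))"
      using rho_td[of a c x] fa c 3 cfabove f_def by simp
    have rcb: "rho (Some c) b = (x, floor_log (b x - c x))"
      using rho_Some_td[OF c b] 3 cbabove by simp
    have sum: "(c x - f x + ex a x) + (b x - c x) = b x - f x + ex a x" using 3 by simp
    have "floor_log (c x - f x + ex a x) < floor_log (b x - f x + ex a x) \<or>
          floor_log (b x - c x) < floor_log (b x - f x + ex a x)"
      using floor_log_split[of "c x - f x + ex a x" "b x - c x"] 3 sum by simp
    then show ?thesis using rac rcb rab xF by (auto simp: Ref_iff)
  qed
qed

end


context wlin0 begin

lemma rhoA:
  assumes fa: "lo a \<in> FS L" and b: "b \<in> FS L" and ab: "below a b"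
    and q: "(q, rho a b) \<in> omega_times L" and qne: "q \<noteq> rho a b"
  shows "\<exists>c \<in> FS L. below a c \<and> lexless L c b \<and> (q, rho a c) \<in> omega_times L \<and>
           (q, rho (Some c) b) \<in> omega_times L"
proof -
  define f where "f = lo a"
  have f: "f \<in> FS L" using fa f_def by simp
  obtain y i where qyi: "q = (y, i)" by (cases q)
  show ?thesis
  proof (cases "f = b")
    case True
    then have "rho a b = (x0, 0)" by (simp add: rho_def f_def)
    then have False using q qne qyi x0min Lanti by (auto simp: Ref_iff)
    then show ?thesis ..
  next
    case fneb: False
    have fb: "lexless L f b"
      using ab fneb zero_le[OF b] unfolding below_def f_def lo_def by (cases a) auto
    define x where "x = td L f b"
    have xF: "x \<in> Field L" and fxbx: "f x < b x" using fb lexless_td[OF f b] td_prop[OF f b fneb] x_def by auto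
    have fbabove: "\<forall>z. (x,z) \<in> L \<and> z \<noteq> x \<longrightarrow> f z = b z" using td_above[OF f b fneb] x_def by simp
    define n where "n = b x - f x + ex a x"
    have npos: "n > 0" using fxbx n_def by simp
    have rab: "rho a b = (x, floor_log n)"
      using rho_td[of a b x] fa b fxbx fbabove f_def n_def by simp
    have yF: "y \<in> Field L" and cases: "((y,x) \<in> L \<and> y \<noteq> x) \<or> (y = x \<and> i < floor_log n)"
      using q qne unfolding qyi rab by (auto simp: Ref_iff)
    have exle: "ex a x \<le> 1" by (simp add: ex_def)
    show ?thesis
    proof (cases "y = x \<and> i < floor_log n")
      case True
      then have yx: "y = x" and il: "Suc i \<le> floor_log n" by auto
      have n2: "2 * 2^i \<le> n" using le_floor_log_iff[OF npos, of "Suc i"] il by simp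
      have bxge: "2^i \<le> b x" using n2 exle n_def by simp
      have pos: "(0::nat) < 2^i" by simp
      define c where "c = (\<lambda>z. if (x,z) \<in> L \<and> z \<noteq> x then b z else if z = x then b x - 2^i else 0)"
      have cx: "c x = b x - 2^i" by (simp add: c_def)
      have cabove: "\<forall>z. (x,z) \<in> L \<and> z \<noteq> x \<longrightarrow> c z = b z" by (simp add: c_def)
      have c: "c \<in> FS L"
      proof -
        have "supp c \<subseteq> supp b \<union> {x}" by (auto simp: supp_def c_def split: if_splits)
        then show ?thesis using b xF unfolding FS_def by (auto intro: finite_subset)
      qed
      have cxbx: "c x < b x" using cx bxge pos by linarith
      have cb: "lexless L c b" unfolding lexless_def using cxbx cabove by blast
      have rcb: "rho (Some c) b = (x, i)"
        using rho_Some_td[OF c b _ cabove] cxbx cx bxge by simp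
      have q1: "(q, rho (Some c) b) \<in> omega_times L" using rcb qyi yx xF Lrefl by (simp add: Ref_iff)
      show ?thesis
      proof (cases "f x < c x")
        case True
        have cfabove: "\<forall>z. (x,z) \<in> L \<and> z \<noteq> x \<longrightarrow> f z = c z" using cabove fbabove by simp
        have fc: "lexless L f c" unfolding lexless_def using True cfabove by blast
        then have ac: "below a c" using ab unfolding below_def f_def lo_def by (cases a) auto
        have rac: "rho a c = (x, floor_log (c x - f x + ex a x))"
          using rho_td[of a c x] fa c True cfabove f_def by (simp add: eq_commute)
        have "2^i \<le> c x - f x + ex a x" using True cx n2 n_def bxge by simp
        then have "i \<le> floor_log (c x - f x + ex a x)" using le_floor_log_iff True by simp
        then have "(q, rho a c) \<in> omega_times L" using rac qyi yx xF by (simp add: Ref_iff)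
        then show ?thesis using c ac cb q1 by blast
      next
        case False
        then have "n \<le> 2^i + ex a x" using cx n_def by simp
        then have "2^i \<le> ex a x" using n2 by simp
        then have e1: "ex a x = 1" and "2^i \<le> (1::nat)" using exle
          by (auto simp: ex_def split: if_splits)
        then have i0: "i = 0" by (metis le_antisym less_one not_less one_le_power power_0 power_inject_exp rel_simps(49) semiring_norm(76))
        from e1 have aN: "a = None" and xx0: "x = x0" by (auto simp: ex_def split: if_splits)
        have ac: "below a c" using aN by (simp add: below_def)
        have "(q, rho a c) \<in> omega_times L"
          using bot_le[OF rho_Field[OF fa c]] qyi yx xx0 i0 by simp
        then show ?thesis using c ac cb q1 by blast
      qed
    next
      case False
      then have yx: "(y,x) \<in> L" "y \<noteq> x" using cases by auto
      define c where "c = (\<lambda>z. if (y,z) \<in> L \<and> z \<noteq> y then f z else if z = y then f y + 2^i else 0)"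
      have cabove: "\<forall>z. (y,z) \<in> L \<and> z \<noteq> y \<longrightarrow> c z = f z" by (simp add: c_def)
      have cy: "c y = f y + 2^i" by (simp add: c_def)
      have c: "c \<in> FS L"
      proof -
        have "supp c \<subseteq> supp f \<union> {y}" by (auto simp: supp_def c_def split: if_splits)
        then show ?thesis using f yF unfolding FS_def by (auto intro: finite_subset)
      qed
      have fc: "lexless L f c" unfolding lexless_def
        by (rule exI[of _ y]) (use cy cabove in auto)
      then have ac: "below a c" using ab unfolding below_def f_def lo_def by (cases a) auto
      have cxfx: "c x = f x" using cabove yx by simp
      have cbabove: "\<forall>z. (x,z) \<in> L \<and> z \<noteq> x \<longrightarrow> c z = b z"
      proof (intro allI impI)
        fix z assume z: "(x,z) \<in> L \<and> z \<noteq> x"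
        have "(y,z) \<in> L" using Ltrans yx z by blast
        moreover have "z \<noteq> y" using z yx Lanti by blast
        ultimately show "c z = b z" using cabove fbabove z by simp
      qed
      have cb: "lexless L c b" unfolding lexless_def
        by (rule exI[of _ x]) (use cxfx fxbx cbabove in auto)
      have "rho (Some c) b = (x, floor_log (b x - c x))"
        using rho_Some_td[OF c b _ cbabove] cxfx fxbx by simp
      then have q1: "(q, rho (Some c) b) \<in> omega_times L" using qyi yx yF xF by (simp add: Ref_iff)
      have ab1: "\<forall>z. (y,z) \<in> L \<and> z \<noteq> y \<longrightarrow> lo a z = c z" using cabove f_def by simp
      have ab2: "lo a y \<noteq> c y" using cy f_def by simp
      have "rho a c = (y, floor_log (c y - lo a y + ex a y))"
        using rho_td[OF fa c ab2 ab1] .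
      then have "rho a c = (y, floor_log (2^i + ex a y))" using cy f_def by simp
      moreover have "i \<le> floor_log (2^i + ex a y)"
      proof -
        have "(2::nat)^i \<le> 2^i + ex a y" by simp
        then show ?thesis using le_floor_log_iff[of "2^i + ex a y" i] by simp
      qed
      ultimately have "(q, rho a c) \<in> omega_times L" using qyi yF by (simp add: Ref_iff)
      then show ?thesis using c ac cb q1 by blast
    qed
  qed
qed

end


lemma finite_min_lin:
  assumes L: "Linear_order L" and fin: "finite D" and ne: "D \<noteq> {}" and sub: "D \<subseteq> Field L"
  shows "\<exists>x\<in>D. \<forall>y\<in>D. (x,y) \<in> L"
  using fin ne sub
proof (induction D rule: finite_ne_induct)
  case (singleton x)
  then show ?case using L by (auto simp: order_on_defs refl_on_def)
next
  case (insert z D)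
  then obtain x where x: "x \<in> D" "\<forall>y\<in>D. (x,y) \<in> L" by auto
  have tot: "total_on (Field L) L" and tr: "trans L" and rf: "refl_on (Field L) L"
    using L by (auto simp: order_on_defs)
  have "z \<in> Field L" "x \<in> Field L" using insert x by auto
  then have "(z,x) \<in> L \<or> (x,z) \<in> L" using tot rf by (cases "z = x") (auto simp: total_on_def refl_on_def)
  then show ?case
  proof
    assume zx: "(z,x) \<in> L"
    have "\<forall>y\<in>insert z D. (z,y) \<in> L"
      using x zx tr rf \<open>z \<in> Field L\<close> by (auto dest: transD simp: refl_on_def)
    then show ?thesis by auto
  next
    assume "(x,z) \<in> L" then show ?thesis using x by auto
  qed
qed

locale gapctx = wlin0 +
  fixes S and T
  assumes S_FS: "S \<subseteq> FS L" and T_FS: "T \<in> FS L"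
    and S_T: "\<And>g. g \<in> S \<Longrightarrow> lexless L g T"
    and T_S: "\<And>c. c \<in> FS L \<Longrightarrow> lexless L c T \<Longrightarrow> c \<in> S"
begin

definition gap :: "('a \<Rightarrow> nat) set \<Rightarrow> ('a \<Rightarrow> nat) option \<Rightarrow> ('a \<Rightarrow> nat) \<Rightarrow> bool" where
  "gap E a b \<longleftrightarrow> (case a of None \<Rightarrow> True | Some e \<Rightarrow> e \<in> E) \<and> (b \<in> E \<or> b = T) \<and> below a b \<and>
     (\<forall>e\<in>E. \<not> (below a e \<and> lexless L e b))"

definition Rf :: "('a \<Rightarrow> nat) set \<Rightarrow> 'a \<times> nat" where
  "Rf E = (SOME p. (\<exists>a b. gap E a b \<and> p = rho a b) \<and> (\<forall>a b. gap E a b \<longrightarrow> (p, rho a b) \<in> omega_times L))"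

lemma below_FS: "E \<subseteq> S \<Longrightarrow> (case a of None \<Rightarrow> True | Some e \<Rightarrow> e \<in> E) \<Longrightarrow> lo a \<in> FS L"
  using S_FS by (cases a) (auto simp: lo_def zero_FS)

lemma gap_FS: "E \<subseteq> S \<Longrightarrow> gap E a b \<Longrightarrow> lo a \<in> FS L \<and> b \<in> FS L"
  using below_FS S_FS T_FS unfolding gap_def by blast

lemma below_trans: "lo a \<in> FS L \<Longrightarrow> c \<in> FS L \<Longrightarrow> e \<in> FS L \<Longrightarrow> below a c \<Longrightarrow> lexless L c e \<Longrightarrow> below a e"
  unfolding below_def lo_def by (cases a) (auto intro: lexless_trans)

lemma exists_min_lex:
  assumes "finite D" "D \<noteq> {}" "D \<subseteq> FS L"
  shows "\<exists>b\<in>D. \<forall>e\<in>D. \<not> lexless L e b"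
  using assms
proof (induction D rule: finite_ne_induct)
  case (singleton x) then show ?case using lexless_irrefl by auto
next
  case (insert z D)
  then obtain b where b: "b \<in> D" "\<forall>e\<in>D. \<not> lexless L e b" by auto
  show ?case
  proof (cases "lexless L z b")
    case True
    have "\<forall>e\<in>insert z D. \<not> lexless L e z"
      using b True insert.prems lexless_irrefl lexless_trans by (metis insert_iff insert_subset subsetD)
    then show ?thesis by blast
  next
    case False then show ?thesis using b by blast
  qed
qed

lemma gap_exists: "finite E \<Longrightarrow> E \<subseteq> S \<Longrightarrow> \<exists>b. gap E None b"
proof -
  assume fin: "finite E" and ES: "E \<subseteq> S"
  obtain b where b: "b \<in> insert T E" "\<forall>e\<in>insert T E. \<not> lexless L e b"
    using exists_min_lex[of "insert T E"] fin ES S_FS T_FS by auto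
  then have "gap E None b" unfolding gap_def below_def by auto
  then show ?thesis by blast
qed

lemma gaps_finite: "finite E \<Longrightarrow> finite {(a,b). gap E a b}"
proof -
  assume fin: "finite E"
  have "{(a,b). gap E a b} \<subseteq> (insert None (Some ` E)) \<times> (insert T E)"
    unfolding gap_def by (auto split: option.splits)
  then show ?thesis using fin by (auto intro: finite_subset)
qed

lemma Rf_prop:
  assumes fin: "finite E" and ES: "E \<subseteq> S"
  shows "(\<exists>a b. gap E a b \<and> Rf E = rho a b) \<and> (\<forall>a b. gap E a b \<longrightarrow> (Rf E, rho a b) \<in> omega_times L)"
proof -
  let ?Q = "(\<lambda>(a,b). rho a b) ` {(a,b). gap E a b}"
  have fQ: "finite ?Q" using gaps_finite[OF fin] by simp
  have neQ: "?Q \<noteq> {}" using gap_exists[OF fin ES] by auto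
  have subQ: "?Q \<subseteq> Field (omega_times L)" using gap_FS[OF ES] rho_Field by auto
  have LR: "Linear_order (omega_times L)" using WRef by (simp add: order_on_defs)
  obtain p where p: "p \<in> ?Q" "\<forall>y\<in>?Q. (p,y) \<in> omega_times L"
    using finite_min_lin[OF LR fQ neQ subQ] by blast
  then have "(\<exists>a b. gap E a b \<and> p = rho a b) \<and> (\<forall>a b. gap E a b \<longrightarrow> (p, rho a b) \<in> omega_times L)"
    by auto
  then show ?thesis unfolding Rf_def by (rule someI)
qed

lemma Rf_Field: "finite E \<Longrightarrow> E \<subseteq> S \<Longrightarrow> Rf E \<in> Field (omega_times L)"
  using Rf_prop gap_FS rho_Field by metis

lemma Reftrans: "(p,q) \<in> omega_times L \<Longrightarrow> (q,s) \<in> omega_times L \<Longrightarrow> (p,s) \<in> omega_times L"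
  using WRef by (auto simp: order_on_defs dest: transD)

lemma Refanti: "(p,q) \<in> omega_times L \<Longrightarrow> (q,p) \<in> omega_times L \<Longrightarrow> p = q"
  using WRef by (auto simp: order_on_defs dest: antisymD)

lemma Rf_ge:
  assumes fin: "finite E" and ES: "E \<subseteq> S"
  shows "(q, Rf E) \<in> omega_times L \<longleftrightarrow> q \<in> Field (omega_times L) \<and> (\<forall>a b. gap E a b \<longrightarrow> (q, rho a b) \<in> omega_times L)"
  using Rf_prop[OF fin ES] Reftrans by (metis FieldI1)

lemma gap_split1:
  assumes ES: "E \<subseteq> S" and g: "gap E a b" and c: "c \<in> S" and ac: "below a c" and cb: "lexless L c b"
  shows "gap (insert c E) a c" "gap (insert c E) (Some c) b"
proof -
  have fa: "lo a \<in> FS L" and b: "b \<in> FS L" using gap_FS[OF ES g] by auto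
  have cF: "c \<in> FS L" using c S_FS by auto
  show "gap (insert c E) a c"
    unfolding gap_def
  proof (intro conjI)
    show "case a of None \<Rightarrow> True | Some e \<Rightarrow> e \<in> insert c E" using g unfolding gap_def by (auto split: option.splits)
    show "\<forall>e\<in>insert c E. \<not> (below a e \<and> lexless L e c)"
    proof
      fix e assume e: "e \<in> insert c E"
      show "\<not> (below a e \<and> lexless L e c)"
      proof
        assume h: "below a e \<and> lexless L e c"
        then have "e \<noteq> c" using lexless_irrefl by auto
        then have eE: "e \<in> E" using e by auto
        then have "e \<in> FS L" using ES S_FS by auto
        then have "lexless L e b" using h cb lexless_trans cF b by blast
        then show False using g eE h unfolding gap_def by blast
      qed
    qed
  qed (use ac in auto)
  show "gap (insert c E) (Some c) b"
    unfolding gap_def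
  proof (intro conjI)
    show "\<forall>e\<in>insert c E. \<not> (below (Some c) e \<and> lexless L e b)"
    proof
      fix e assume e: "e \<in> insert c E"
      show "\<not> (below (Some c) e \<and> lexless L e b)"
      proof
        assume h: "below (Some c) e \<and> lexless L e b"
        then have "e \<noteq> c" using lexless_irrefl by (auto simp: below_def)
        then have eE: "e \<in> E" using e by auto
        then have eF: "e \<in> FS L" using ES S_FS by auto
        have "below a e" using below_trans[OF fa cF eF ac] h by (simp add: below_def)
        then show False using g eE h unfolding gap_def by blast
      qed
    qed
  qed (use g cb in \<open>auto simp: gap_def below_def\<close>)
qed

lemma le_T: "E \<subseteq> S \<Longrightarrow> b \<in> E \<or> b = T \<Longrightarrow> b = T \<or> lexless L b T"
  using S_T by auto

lemma gap_split2:
  assumes ES: "E \<subseteq> S" and g: "gap E a b" and c: "c \<in> S" and ac: "below a c" and cb: "lexless L c b"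
    and g': "gap (insert c E) a' b'"
  shows "gap E a' b' \<or> (a' = a \<and> b' = c) \<or> (a' = Some c \<and> b' = b)"
proof -
  have fa: "lo a \<in> FS L" and b: "b \<in> FS L" using gap_FS[OF ES g] by auto
  have cF: "c \<in> FS L" using c S_FS by auto
  have ES': "insert c E \<subseteq> S" using ES c by auto
  have fa': "lo a' \<in> FS L" and b': "b' \<in> FS L" using gap_FS[OF ES' g'] by auto
  have a'c: "case a' of None \<Rightarrow> True | Some e \<Rightarrow> e \<in> insert c E" and b'c: "b' \<in> insert c E \<or> b' = T"
    and a'b': "below a' b'" and nb': "\<forall>e\<in>insert c E. \<not> (below a' e \<and> lexless L e b')"
    using g' unfolding gap_def by auto
  have ac0: "case a of None \<Rightarrow> True | Some e \<Rightarrow> e \<in> E" and bc: "b \<in> E \<or> b = T"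
    and nb: "\<forall>e\<in>E. \<not> (below a e \<and> lexless L e b)"
    using g unfolding gap_def by auto
  have EF: "\<And>e. e \<in> E \<Longrightarrow> e \<in> FS L" using ES S_FS by auto
  show ?thesis
  proof (cases "a' = Some c")
    case True
    then have cb': "lexless L c b'" using a'b' by (simp add: below_def)
    have "b' = b"
    proof -
      consider "b' = b" | "lexless L b b'" | "lexless L b' b" using lexless_total[OF b' b] by blast
      then show ?thesis
      proof cases
        case 2
        have "b \<noteq> T"
        proof
          assume "b = T"
          then have "lexless L T b'" using 2 by simp
          moreover have "b' = T \<or> lexless L b' T" using le_T[OF ES'] b'c by blast
          ultimately show False using lexless_irrefl lexless_asym[OF T_FS b'] by auto
        qed
        then have "b \<in> E" using bc by auto
        then show ?thesis using nb' 2 cb True by (auto simp: below_def)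
      next
        case 3
        have "b' \<noteq> T"
        proof
          assume "b' = T"
          then have "lexless L T b" using 3 by simp
          moreover have "b = T \<or> lexless L b T" using le_T[OF ES] bc by blast
          ultimately show False using lexless_irrefl lexless_asym[OF T_FS b] by auto
        qed
        then have "b' \<in> insert c E" using b'c by auto
        moreover have "b' \<noteq> c" using cb' lexless_irrefl by auto
        ultimately have "b' \<in> E" by auto
        moreover have "below a b'" using below_trans[OF fa cF b' ac cb'] .
        ultimately show ?thesis using nb 3 by blast
      qed simp
    qed
    then show ?thesis using True by simp
  next
    case notc: False
    show ?thesis
    proof (cases "b' = c")
      case True
      have "a' = a"
      proof (cases a)
        case None
        show ?thesis
        proof (cases a')
          case (Some e')
          then have "e' \<in> E" using a'c notc by auto
          moreover have "lexless L e' c" using a'b' Some True by (simp add: below_def)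
          moreover have "lexless L e' b" using calculation cb lexless_trans EF cF b by blast
          ultimately show ?thesis using nb None by (auto simp: below_def)
        qed (use None in simp)
      next
        case (Some ea)
        have eaE: "ea \<in> E" using ac0 Some by simp
        have eac: "lexless L ea c" using ac Some by (simp add: below_def)
        show ?thesis
        proof (cases a')
          case None
          then show ?thesis using nb' eaE eac True by (auto simp: below_def)
        next
          case (Some e')
          then have e'E: "e' \<in> E" using a'c notc by auto
          have e'c: "lexless L e' c" using a'b' Some True by (simp add: below_def)
          consider "e' = ea" | "lexless L e' ea" | "lexless L ea e'"
            using lexless_total[OF EF[OF e'E] EF[OF eaE]] by blast
          then show ?thesis
          proof cases
            case 1 then show ?thesis using Some \<open>a = Some ea\<close> by simp
          next
            case 2 then show ?thesis using nb' eaE eac True Some by (auto simp: below_def)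
          next
            case 3
            have "lexless L e' b" using e'c cb lexless_trans EF[OF e'E] cF b by blast
            then show ?thesis using nb e'E 3 \<open>a = Some ea\<close> by (auto simp: below_def)
          qed
        qed
      qed
      then show ?thesis using True by simp
    next
      case False
      have "gap E a' b'"
        unfolding gap_def
      proof (intro conjI)
        show "case a' of None \<Rightarrow> True | Some e \<Rightarrow> e \<in> E" using a'c notc by (auto split: option.splits)
        show "b' \<in> E \<or> b' = T" using b'c False by auto
        show "below a' b'" by fact
        show "\<forall>e\<in>E. \<not> (below a' e \<and> lexless L e b')" using nb' by blast
      qed
      then show ?thesis by simp
    qed
  qed
qed

lemma fun_A:
  assumes fin: "finite E" and ES: "E \<subseteq> S" and g: "gap E a b"
    and q: "(q, Rf E) \<in> omega_times L" and qne: "q \<noteq> Rf E"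
  shows "\<exists>c \<in> S. below a c \<and> lexless L c b \<and> (q, Rf (insert c E)) \<in> omega_times L"
proof -
  have fa: "lo a \<in> FS L" and b: "b \<in> FS L" using gap_FS[OF ES g] by auto
  have Rle: "(Rf E, rho a b) \<in> omega_times L" using Rf_prop[OF fin ES] g by blast
  have qr: "(q, rho a b) \<in> omega_times L" using Reftrans q Rle by blast
  have qne': "q \<noteq> rho a b" using Refanti q Rle qne by blast
  have ab: "below a b" using g by (simp add: gap_def)
  obtain c where cF: "c \<in> FS L" and ac: "below a c" and cb: "lexless L c b"
    and q1: "(q, rho a c) \<in> omega_times L" and q2: "(q, rho (Some c) b) \<in> omega_times L"
    using rhoA[OF fa b ab qr qne'] by blast
  have cS: "c \<in> S"
  proof -
    have "b = T \<or> lexless L b T" using le_T[OF ES] g by (simp add: gap_def)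
    then have "lexless L c T" using cb lexless_trans[OF cF b T_FS] by auto
    then show ?thesis using T_S cF by blast
  qed
  have fin': "finite (insert c E)" and ES': "insert c E \<subseteq> S" using fin ES cS by auto
  have "\<forall>a' b'. gap (insert c E) a' b' \<longrightarrow> (q, rho a' b') \<in> omega_times L"
  proof (intro allI impI)
    fix a' b' assume g': "gap (insert c E) a' b'"
    from gap_split2[OF ES g cS ac cb g'] show "(q, rho a' b') \<in> omega_times L"
    proof (elim disjE conjE)
      assume "gap E a' b'"
      then have "(Rf E, rho a' b') \<in> omega_times L" using Rf_prop[OF fin ES] by blast
      then show ?thesis using q Reftrans by blast
    qed (use q1 q2 in auto)
  qed
  moreover have "q \<in> Field (omega_times L)" using q by (auto intro: FieldI1)
  ultimately have "(q, Rf (insert c E)) \<in> omega_times L" using Rf_ge[OF fin' ES'] by blast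
  then show ?thesis using cS ac cb by blast
qed

lemma fun_B:
  assumes fin: "finite E" and ES: "E \<subseteq> S"
  shows "\<exists>a b. gap E a b \<and> (\<forall>c \<in> S. below a c \<and> lexless L c b \<longrightarrow>
            (Rf (insert c E), Rf E) \<in> omega_times L \<and> Rf (insert c E) \<noteq> Rf E)"
proof -
  obtain a b where g: "gap E a b" and R: "Rf E = rho a b" using Rf_prop[OF fin ES] by blast
  have fa: "lo a \<in> FS L" and b: "b \<in> FS L" using gap_FS[OF ES g] by auto
  have "\<forall>c \<in> S. below a c \<and> lexless L c b \<longrightarrow>
            (Rf (insert c E), Rf E) \<in> omega_times L \<and> Rf (insert c E) \<noteq> Rf E"
  proof (intro ballI impI)
    fix c assume cS: "c \<in> S" and h: "below a c \<and> lexless L c b"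
    have cF: "c \<in> FS L" using cS S_FS by auto
    have fin': "finite (insert c E)" and ES': "insert c E \<subseteq> S" using fin ES cS by auto
    note g1 = gap_split1[OF ES g cS conjunct1[OF h] conjunct2[OF h]]
    have R1: "(Rf (insert c E), rho a c) \<in> omega_times L" "(Rf (insert c E), rho (Some c) b) \<in> omega_times L"
      using Rf_prop[OF fin' ES'] g1 by blast+
    from rhoB[OF fa b cF conjunct1[OF h] conjunct2[OF h]]
    show "(Rf (insert c E), Rf E) \<in> omega_times L \<and> Rf (insert c E) \<noteq> Rf E"
    proof (elim disjE conjE)
      assume "(rho a c, rho a b) \<in> omega_times L" "rho a c \<noteq> rho a b"
      then show ?thesis using R1(1) R Reftrans Refanti by metis
    next
      assume "(rho (Some c) b, rho a b) \<in> omega_times L" "rho (Some c) b \<noteq> rho a b"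
      then show ?thesis using R1(2) R Reftrans Refanti by metis
    qed
  qed
  then show ?thesis using g by blast
qed

end


locale Xctx =
  fixes Bo :: "'b rel" and m :: nat and b0 :: 'b
  assumes WBo: "Well_order Bo" and b0F: "b0 \<in> Field Bo" and b0min: "\<And>y. y \<in> Field Bo \<Longrightarrow> (b0, y) \<in> Bo"
    and m1: "m \<ge> 1"
begin

abbreviation "LL \<equiv> top_ext Bo"
abbreviation "SS \<equiv> {g \<in> FS LL. g None < m}"
abbreviation "TT \<equiv> (\<lambda>z::'b option. if z = None then m else 0)"

lemma WLL: "Well_order LL" using Well_order_top_ext[OF WBo] .

lemma FLL: "Field LL = insert None (Some ` Field Bo)" by (rule Field_top_ext)

lemma None_above: "(None, y) \<in> LL \<longleftrightarrow> y = None" by (cases y) (auto simp: top_ext_iff)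

sublocale gapctx LL "Some b0" SS TT
proof -
  show "gapctx LL (Some b0) SS TT"
  proof (unfold_locales)
    show "Well_order LL" by (rule WLL)
    show "Some b0 \<in> Field LL" using b0F FLL by simp
    show "(Some b0, y) \<in> LL" if "y \<in> Field LL" for y
      using that b0F b0min unfolding FLL by (cases y) (auto simp: top_ext_iff)
    show "SS \<subseteq> FS LL" by auto
    show "TT \<in> FS LL" by (auto simp: FS_def supp_def FLL)
    show "lexless LL g TT" if "g \<in> SS" for g
      unfolding lexless_def using that None_above by (intro exI[of _ None]) auto
    show "c \<in> SS" if cF: "c \<in> FS LL" and cT: "lexless LL c TT" for c
    proof -
      obtain x where x: "c x < TT x" using cT unfolding lexless_def by blast
      then have "x = None" by (auto split: if_splits)
      then show ?thesis using x cF by simp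
    qed
  qed
qed

abbreviation "X \<equiv> ord_mult_nat (omega_pow Bo) m"

definition enc :: "nat \<times> ('b \<Rightarrow> nat) \<Rightarrow> 'b option \<Rightarrow> nat" where
  "enc p = (\<lambda>z. case z of None \<Rightarrow> fst p | Some d \<Rightarrow> snd p d)"

definition dec :: "('b option \<Rightarrow> nat) \<Rightarrow> nat \<times> ('b \<Rightarrow> nat)" where
  "dec g = (g None, \<lambda>d. g (Some d))"

lemma omega_pow_iff: "(f, g) \<in> omega_pow Bo \<longleftrightarrow> f \<in> FS Bo \<and> g \<in> FS Bo \<and>
   (f = g \<or> (\<exists>x. f x < g x \<and> (\<forall>y. (x, y) \<in> Bo \<and> y \<noteq> x \<longrightarrow> f y = g y)))"
  unfolding omega_pow_def FS_def supp_def Let_def by simp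

lemma Field_omega_pow: "Field (omega_pow Bo) = FS Bo"
proof
  show "Field (omega_pow Bo) \<subseteq> FS Bo"
    by (auto simp: Field_def omega_pow_iff)
  show "FS Bo \<subseteq> Field (omega_pow Bo)"
  proof
    fix f assume "f \<in> FS Bo"
    then have "(f,f) \<in> omega_pow Bo" by (simp add: omega_pow_iff)
    then show "f \<in> Field (omega_pow Bo)" by (auto intro: FieldI1)
  qed
qed

lemma X_iff: "((i,f),(j,g)) \<in> X \<longleftrightarrow> i < m \<and> j < m \<and> f \<in> FS Bo \<and> g \<in> FS Bo \<and>
   (i < j \<or> i = j \<and> (f = g \<or> (\<exists>x. f x < g x \<and> (\<forall>y. (x, y) \<in> Bo \<and> y \<noteq> x \<longrightarrow> f y = g y))))"
  unfolding ord_mult_nat_def Field_omega_pow by (auto simp: omega_pow_iff)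

lemma Field_X: "Field X = {p. fst p < m \<and> snd p \<in> FS Bo}"
proof
  show "Field X \<subseteq> {p. fst p < m \<and> snd p \<in> FS Bo}"
    by (auto simp: Field_def X_iff)
  show "{p. fst p < m \<and> snd p \<in> FS Bo} \<subseteq> Field X"
  proof
    fix p assume "p \<in> {p. fst p < m \<and> snd p \<in> FS Bo}"
    then have "(p,p) \<in> X" by (cases p) (simp add: X_iff)
    then show "p \<in> Field X" by (auto intro: FieldI1)
  qed
qed

lemma enc_S: "p \<in> Field X \<Longrightarrow> enc p \<in> SS"
proof -
  assume p: "p \<in> Field X"
  then have p1: "fst p < m" and p2: "snd p \<in> FS Bo" by (auto simp: Field_X)
  have "supp (enc p) \<subseteq> insert None (Some ` supp (snd p))"
  proof
    fix z assume "z \<in> supp (enc p)"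
    then show "z \<in> insert None (Some ` supp (snd p))"
      by (cases z) (auto simp: supp_def enc_def)
  qed
  moreover have "finite (insert None (Some ` supp (snd p)))" using p2 by (simp add: FS_def)
  moreover have "insert None (Some ` supp (snd p)) \<subseteq> Field LL" using p2 by (auto simp: FS_def FLL)
  ultimately have "enc p \<in> FS LL" unfolding FS_def by (auto intro: finite_subset)
  then show ?thesis using p1 by (simp add: enc_def)
qed

lemma dec_X: "g \<in> SS \<Longrightarrow> dec g \<in> Field X \<and> enc (dec g) = g"
proof -
  assume g: "g \<in> SS"
  have fin: "finite (supp g)" and sub: "supp g \<subseteq> Field LL" using g by (auto simp: FS_def)
  have "supp (\<lambda>d. g (Some d)) = Some -` supp g" by (auto simp: supp_def)
  then have "finite (supp (\<lambda>d. g (Some d)))" using fin by (simp add: finite_vimageI)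
  moreover have "supp (\<lambda>d. g (Some d)) \<subseteq> Field Bo" using sub by (auto simp: supp_def FLL)
  ultimately have "(\<lambda>d. g (Some d)) \<in> FS Bo" by (simp add: FS_def)
  then have "dec g \<in> Field X" using g by (simp add: Field_X dec_def)
  moreover have "enc (dec g) = g" by (auto simp: enc_def dec_def split: option.splits)
  ultimately show ?thesis by simp
qed

lemma enc_inj: "enc p = enc q \<Longrightarrow> p = q"
proof -
  assume h: "enc p = enc q"
  have "fst p = fst q" using fun_cong[OF h, of None] by (simp add: enc_def)
  moreover have "snd p = snd q" using fun_cong[OF h, of "Some d" for d] by (auto simp: enc_def)
  ultimately show "p = q" by (simp add: prod_eq_iff)
qed

lemma X_enc: "p \<in> Field X \<Longrightarrow> q \<in> Field X \<Longrightarrow>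
   (p, q) \<in> X \<longleftrightarrow> enc p = enc q \<or> lexless LL (enc p) (enc q)"
proof -
  assume p: "p \<in> Field X" and q: "q \<in> Field X"
  obtain i f where pif: "p = (i,f)" by (cases p)
  obtain j g where qjg: "q = (j,g)" by (cases q)
  have im: "i < m" "j < m" and fF: "f \<in> FS Bo" and gF: "g \<in> FS Bo" using p q pif qjg by (auto simp: Field_X)
  have encp: "enc p None = i" "\<And>d. enc p (Some d) = f d" and encq: "enc q None = j" "\<And>d. enc q (Some d) = g d"
    using pif qjg by (auto simp: enc_def)
  have eq: "enc p = enc q \<longleftrightarrow> i = j \<and> f = g"
    using enc_inj pif qjg by auto
  have lex: "lexless LL (enc p) (enc q) \<longleftrightarrow>
     (i < j \<or> i = j \<and> (\<exists>x. f x < g x \<and> (\<forall>y. (x, y) \<in> Bo \<and> y \<noteq> x \<longrightarrow> f y = g y)))"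
  proof
    assume "lexless LL (enc p) (enc q)"
    then obtain x' where x': "enc p x' < enc q x'" "\<forall>y'. (x',y') \<in> LL \<and> y' \<noteq> x' \<longrightarrow> enc p y' = enc q y'"
      unfolding lexless_def by blast
    show "i < j \<or> i = j \<and> (\<exists>x. f x < g x \<and> (\<forall>y. (x, y) \<in> Bo \<and> y \<noteq> x \<longrightarrow> f y = g y))"
    proof (cases x')
      case None then show ?thesis using x' encp encq by simp
    next
      case (Some x)
      have fg: "f x < g x" using x' Some encp encq by simp
      then have "g x \<noteq> 0" by simp
      then have xF: "x \<in> Field Bo" using gF by (auto simp: FS_def supp_def)
      have "(Some x, None) \<in> LL" using xF by (simp add: top_ext_iff)
      then have ij: "i = j" using x' Some encp encq by force
      have "\<forall>y. (x, y) \<in> Bo \<and> y \<noteq> x \<longrightarrow> f y = g y"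
      proof (intro allI impI)
        fix y assume "(x, y) \<in> Bo \<and> y \<noteq> x"
        then have "(Some x, Some y) \<in> LL" "Some y \<noteq> Some x" by (auto simp: top_ext_iff)
        then show "f y = g y" using x' Some encp encq by metis
      qed
      then show ?thesis using ij fg by blast
    qed
  next
    assume h: "i < j \<or> i = j \<and> (\<exists>x. f x < g x \<and> (\<forall>y. (x, y) \<in> Bo \<and> y \<noteq> x \<longrightarrow> f y = g y))"
    show "lexless LL (enc p) (enc q)"
    proof (cases "i < j")
      case True
      then show ?thesis unfolding lexless_def using encp encq None_above
        by (intro exI[of _ None]) auto
    next
      case False
      then obtain x where ij: "i = j" and x: "f x < g x" "\<forall>y. (x, y) \<in> Bo \<and> y \<noteq> x \<longrightarrow> f y = g y"
        using h by blast
      show ?thesis unfolding lexless_def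
      proof (intro exI[of _ "Some x"] conjI allI impI)
        show "enc p (Some x) < enc q (Some x)" using x encp encq by simp
        fix y' assume y': "(Some x, y') \<in> LL \<and> y' \<noteq> Some x"
        show "enc p y' = enc q y'"
        proof (cases y')
          case None then show ?thesis using ij encp encq by simp
        next
          case (Some y)
          then have "(x,y) \<in> Bo" "y \<noteq> x" using y' by (auto simp: top_ext_iff)
          then show ?thesis using x Some encp encq by simp
        qed
      qed
    qed
  qed
  show "(p, q) \<in> X \<longleftrightarrow> enc p = enc q \<or> lexless LL (enc p) (enc q)"
    unfolding pif qjg X_iff eq[unfolded pif qjg] lex[unfolded pif qjg] using im fF gF by auto
qed

lemma enc_FS: "p \<in> Field X \<Longrightarrow> enc p \<in> FS LL" using enc_S by blast

lemma X_lin: "Linear_order X"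
proof -
  have "refl_on (Field X) X" unfolding refl_on_def using X_enc by auto
  moreover have "trans X"
  proof (rule transI)
    fix p q s assume pq: "(p,q) \<in> X" and qs: "(q,s) \<in> X"
    have F: "p \<in> Field X" "q \<in> Field X" "s \<in> Field X" using pq qs by (auto intro: FieldI1 FieldI2)
    show "(p,s) \<in> X" using pq qs X_enc[OF F(1) F(2)] X_enc[OF F(2) F(3)] X_enc[OF F(1) F(3)]
      lexless_trans[OF enc_FS[OF F(1)] enc_FS[OF F(2)] enc_FS[OF F(3)]] by auto
  qed
  moreover have "antisym X"
  proof (rule antisymI)
    fix p q assume pq: "(p,q) \<in> X" and qp: "(q,p) \<in> X"
    have F: "p \<in> Field X" "q \<in> Field X" using pq by (auto intro: FieldI1 FieldI2)
    show "p = q" using pq qp X_enc[OF F(1) F(2)] X_enc[OF F(2) F(1)]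
      lexless_asym[OF enc_FS[OF F(1)] enc_FS[OF F(2)]] enc_inj by metis
  qed
  moreover have "total_on (Field X) X"
    unfolding total_on_def
  proof (intro ballI impI)
    fix p q assume F: "p \<in> Field X" "q \<in> Field X" and ne: "p \<noteq> q"
    show "(p,q) \<in> X \<or> (q,p) \<in> X" using X_enc[OF F(1) F(2)] X_enc[OF F(2) F(1)]
      lexless_total[OF enc_FS[OF F(1)] enc_FS[OF F(2)]] by blast
  qed
  ultimately show ?thesis by (auto simp: order_on_defs intro: FieldI1 FieldI2)
qed

end


context Xctx begin

definition RX :: "(nat \<times> ('b \<Rightarrow> nat)) set \<Rightarrow> 'b option \<times> nat" where
  "RX F = Rf (enc ` F)"

lemma encF_S: "F \<subseteq> Field X \<Longrightarrow> enc ` F \<subseteq> SS" using enc_S by blast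

lemma X_le_enc: "x \<in> Field X \<Longrightarrow> y \<in> Field X \<Longrightarrow> (x,y) \<in> X \<Longrightarrow> enc x = enc y \<or> lexless LL (enc x) (enc y)"
  using X_enc by blast

lemma lex_le_trans: "f \<in> FS LL \<Longrightarrow> g \<in> FS LL \<Longrightarrow> h \<in> FS LL \<Longrightarrow> (f = g \<or> lexless LL f g) \<Longrightarrow> lexless LL g h \<Longrightarrow> lexless LL f h"
  using lexless_trans by blast

lemma lex_trans_le: "f \<in> FS LL \<Longrightarrow> g \<in> FS LL \<Longrightarrow> h \<in> FS LL \<Longrightarrow> lexless LL f g \<Longrightarrow> (g = h \<or> lexless LL g h) \<Longrightarrow> lexless LL f h"
  using lexless_trans by blast

lemma X_A:
  assumes fin: "finite F" and FX: "F \<subseteq> Field X" and P: "cutp X F P"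
    and q: "(q, RX F) \<in> omega_times LL" and qne: "q \<noteq> RX F"
  shows "\<exists>c \<in> Field X - F. inGap X F P c \<and> (q, RX (insert c F)) \<in> omega_times LL"
proof -
  define E where "E = enc ` F"
  have ES: "E \<subseteq> SS" using encF_S[OF FX] E_def by simp
  have finE: "finite E" using fin E_def by simp
  define lowS where "lowS = {x\<in>F. P x}"
  define highS where "highS = {x\<in>F. \<not> P x}"
  have XL: "Linear_order X" by (rule X_lin)
  have Xtot: "\<And>x y. x \<in> Field X \<Longrightarrow> y \<in> Field X \<Longrightarrow> x \<noteq> y \<Longrightarrow> (x,y) \<in> X \<or> (y,x) \<in> X"
    using XL by (auto simp: order_on_defs total_on_def)
  have cutP: "\<And>x y. x \<in> F \<Longrightarrow> y \<in> F \<Longrightarrow> (x,y) \<in> X \<Longrightarrow> P y \<Longrightarrow> P x" using P by (auto simp: cutp_def)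
  have eF: "\<And>x. x \<in> Field X \<Longrightarrow> enc x \<in> FS LL" by (rule enc_FS)
  obtain a where ha: "(a = None \<and> lowS = {}) \<or> (\<exists>xa \<in> lowS. a = Some (enc xa) \<and> (\<forall>x\<in>lowS. (x,xa) \<in> X))"
  proof (cases "lowS = {}")
    case True then show ?thesis using that by blast
  next
    case False
    have "finite lowS" "lowS \<subseteq> Field X" using fin FX by (auto simp: lowS_def)
    then obtain xa where "xa \<in> lowS" "\<forall>x\<in>lowS. (x,xa) \<in> X" using finite_max_lin[OF XL _ False] by blast
    then show ?thesis using that by blast
  qed
  obtain b where hb: "(b = TT \<and> highS = {}) \<or> (\<exists>xb \<in> highS. b = enc xb \<and> (\<forall>x\<in>highS. (xb,x) \<in> X))"
  proof (cases "highS = {}")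
    case True then show ?thesis using that by blast
  next
    case False
    have "finite highS" "highS \<subseteq> Field X" using fin FX by (auto simp: highS_def)
    then obtain xb where "xb \<in> highS" "\<forall>x\<in>highS. (xb,x) \<in> X" using finite_min_lin[OF XL _ False] by blast
    then show ?thesis using that by blast
  qed
  have low: "\<And>x. x \<in> F \<Longrightarrow> P x \<Longrightarrow> \<exists>xa\<in>F. a = Some (enc xa) \<and> (enc x = enc xa \<or> lexless LL (enc x) (enc xa))"
  proof -
    fix x assume x: "x \<in> F" "P x"
    then have "x \<in> lowS" by (simp add: lowS_def)
    then obtain xa where xa: "xa \<in> lowS" "a = Some (enc xa)" "(x,xa) \<in> X" using ha by blast
    then show "\<exists>xa\<in>F. a = Some (enc xa) \<and> (enc x = enc xa \<or> lexless LL (enc x) (enc xa))"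
      using X_le_enc[of x xa] FX x by (auto simp: lowS_def)
  qed
  have high: "\<And>x. x \<in> F \<Longrightarrow> \<not> P x \<Longrightarrow> \<exists>xb\<in>F. b = enc xb \<and> (enc xb = enc x \<or> lexless LL (enc xb) (enc x))"
  proof -
    fix x assume x: "x \<in> F" "\<not> P x"
    then have "x \<in> highS" by (simp add: highS_def)
    then obtain xb where xb: "xb \<in> highS" "b = enc xb" "(xb,x) \<in> X" using hb by blast
    then show "\<exists>xb\<in>F. b = enc xb \<and> (enc xb = enc x \<or> lexless LL (enc xb) (enc x))"
      using X_le_enc[of xb x] FX x by (auto simp: highS_def)
  qed
  have aprop: "a = None \<or> (\<exists>xa\<in>F. P xa \<and> a = Some (enc xa))" using ha by (auto simp: lowS_def)
  have bprop: "b = TT \<or> (\<exists>xb\<in>F. \<not> P xb \<and> b = enc xb)" using hb by (auto simp: highS_def)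
  have g: "gap E a b"
    unfolding gap_def
  proof (intro conjI)
    show "case a of None \<Rightarrow> True | Some e \<Rightarrow> e \<in> E" using aprop E_def by auto
    show "b \<in> E \<or> b = TT" using bprop E_def by auto
    show "below a b"
    proof (cases a)
      case None then show ?thesis by (simp add: below_def)
    next
      case (Some ea)
      then obtain xa where xa: "xa \<in> F" "P xa" "ea = enc xa" using aprop by auto
      show ?thesis
      proof (cases "b = TT")
        case True
        have "enc xa \<in> SS" using enc_S FX xa(1) by blast
        then show ?thesis using Some xa(3) True S_T by (simp add: below_def)
      next
        case False
        then obtain xb where xb: "xb \<in> F" "\<not> P xb" "b = enc xb" using bprop by auto
        have "xa \<noteq> xb" using xa xb by auto
        moreover have "(xb, xa) \<notin> X" using cutP xa xb by blast
        ultimately have "(xa, xb) \<in> X" using Xtot FX xa xb by blast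
        then have "enc xa = enc xb \<or> lexless LL (enc xa) (enc xb)" using X_le_enc FX xa xb by blast
        moreover have "enc xa \<noteq> enc xb" using \<open>xa \<noteq> xb\<close> enc_inj by metis
        ultimately show ?thesis using Some xa xb by (auto simp: below_def)
      qed
    qed
    show "\<forall>e\<in>E. \<not> (below a e \<and> lexless LL e b)"
    proof
      fix e assume "e \<in> E"
      then obtain x where x: "x \<in> F" "e = enc x" using E_def by auto
      have exF: "enc x \<in> FS LL" using eF[of x] FX x(1) by blast
      show "\<not> (below a e \<and> lexless LL e b)"
      proof (cases "P x")
        case True
        then obtain xa where xa: "xa \<in> F" "a = Some (enc xa)" "enc x = enc xa \<or> lexless LL (enc x) (enc xa)"
          using low x by blast
        have xaF: "enc xa \<in> FS LL" using eF[of xa] FX xa(1) by blast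
        have "\<not> lexless LL (enc xa) (enc x)"
          using xa(3) lexless_irrefl[of "enc x"] lexless_asym[OF exF xaF] by metis
        then show ?thesis using xa x by (simp add: below_def)
      next
        case False
        then obtain xb where xb: "xb \<in> F" "b = enc xb" "enc xb = enc x \<or> lexless LL (enc xb) (enc x)"
          using high x by blast
        have xbF: "enc xb \<in> FS LL" using eF[of xb] FX xb(1) by blast
        have "\<not> lexless LL (enc x) (enc xb)"
          using xb(3) lexless_irrefl[of "enc x"] lexless_asym[OF xbF exF] by metis
        then show ?thesis using xb x by simp
      qed
    qed
  qed
  have qE: "(q, Rf E) \<in> omega_times LL" "q \<noteq> Rf E" using q qne by (simp_all add: RX_def E_def)
  obtain c' where c'S: "c' \<in> SS" and ac: "below a c'" and cb: "lexless LL c' b"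
    and qc: "(q, Rf (insert c' E)) \<in> omega_times LL"
    using fun_A[OF finE ES g qE] by blast
  define c where "c = dec c'"
  have cX: "c \<in> Field X" and encc: "enc c = c'" using dec_X[OF c'S] c_def by auto
  have c'F: "c' \<in> FS LL" using c'S by simp
  have bF: "b \<in> FS LL" using gap_FS[OF ES g] by simp
  have cnF: "c \<notin> F"
  proof
    assume "c \<in> F"
    then have "c' \<in> E" using encc E_def by auto
    then show False using g ac cb by (auto simp: gap_def)
  qed
  have "inGap X F P c"
    unfolding inGap_def
  proof
    fix x assume x: "x \<in> F"
    have exF: "enc x \<in> FS LL" using eF[of x] FX x(1) by blast
    show "(x, c) \<in> X \<longleftrightarrow> P x"
    proof (cases "P x")
      case True
      then obtain xa where xa: "xa \<in> F" "a = Some (enc xa)" "enc x = enc xa \<or> lexless LL (enc x) (enc xa)"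
        using low x by blast
      have "lexless LL (enc xa) c'" using ac xa by (simp add: below_def)
      have xaF: "enc xa \<in> FS LL" using eF[of xa] FX xa(1) by blast
      have "lexless LL (enc x) c'" using lex_le_trans[OF exF xaF c'F] xa(3) \<open>lexless LL (enc xa) c'\<close> by blast
      then show ?thesis using X_enc[of x c] FX x cX encc True by auto
    next
      case False
      then obtain xb where xb: "xb \<in> F" "b = enc xb" "enc xb = enc x \<or> lexless LL (enc xb) (enc x)"
        using high x by blast
      have xbF: "enc xb \<in> FS LL" using eF[of xb] FX xb(1) by blast
      have "lexless LL c' (enc x)" using lex_trans_le[OF c'F xbF exF] cb xb(2,3) by blast
      then have "\<not> (enc x = c' \<or> lexless LL (enc x) c')"
        using lexless_irrefl[of c'] lexless_asym[OF c'F exF] by blast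
      then show ?thesis using X_enc[of x c] FX x cX encc False by auto
    qed
  qed
  moreover have "RX (insert c F) = Rf (insert c' E)" by (simp add: RX_def E_def encc)
  ultimately show ?thesis using cX cnF qc by auto
qed

lemma X_B:
  assumes fin: "finite F" and FX: "F \<subseteq> Field X"
  shows "\<exists>P. cutp X F P \<and> (\<forall>c \<in> Field X - F. inGap X F P c \<longrightarrow>
            (RX (insert c F), RX F) \<in> omega_times LL \<and> RX (insert c F) \<noteq> RX F)"
proof -
  define E where "E = enc ` F"
  have ES: "E \<subseteq> SS" using encF_S[OF FX] E_def by simp
  have finE: "finite E" using fin E_def by simp
  have XL: "Linear_order X" by (rule X_lin)
  have Xtot: "\<And>x y. x \<in> Field X \<Longrightarrow> y \<in> Field X \<Longrightarrow> x \<noteq> y \<Longrightarrow> (x,y) \<in> X \<or> (y,x) \<in> X"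
    using XL by (auto simp: order_on_defs total_on_def)
  have eF: "\<And>x. x \<in> Field X \<Longrightarrow> enc x \<in> FS LL" by (rule enc_FS)
  obtain a b where g: "gap E a b" and dec: "\<forall>c \<in> SS. below a c \<and> lexless LL c b \<longrightarrow>
            (Rf (insert c E), Rf E) \<in> omega_times LL \<and> Rf (insert c E) \<noteq> Rf E"
    using fun_B[OF finE ES] by blast
  have bF: "b \<in> FS LL" using gap_FS[OF ES g] by simp
  define P where "P x \<longleftrightarrow> (\<exists>ea. a = Some ea \<and> (enc x = ea \<or> lexless LL (enc x) ea))" for x
  have aE: "\<And>ea. a = Some ea \<Longrightarrow> \<exists>xa\<in>F. ea = enc xa" using g by (auto simp: gap_def E_def)
  have cutP: "cutp X F P"
    unfolding cutp_def
  proof (intro ballI impI)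
    fix x y assume x: "x \<in> F" and y: "y \<in> F" and h: "(x,y) \<in> X \<and> P y"
    then obtain ea where ea: "a = Some ea" "enc y = ea \<or> lexless LL (enc y) ea" by (auto simp: P_def)
    obtain xa where xa: "xa \<in> F" "ea = enc xa" using aE[OF ea(1)] by blast
    have "enc x = enc y \<or> lexless LL (enc x) (enc y)" using X_le_enc h FX x y by blast
    then have "enc x = ea \<or> lexless LL (enc x) ea"
      using ea(2) lexless_trans[OF eF eF eF, of x y xa] xa FX x y by auto
    then show "P x" using ea by (auto simp: P_def)
  qed
  have "\<forall>c \<in> Field X - F. inGap X F P c \<longrightarrow>
            (RX (insert c F), RX F) \<in> omega_times LL \<and> RX (insert c F) \<noteq> RX F"
  proof (intro ballI impI)
    fix c assume cXF: "c \<in> Field X - F" and ig: "inGap X F P c"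
    have cX: "c \<in> Field X" and cnF: "c \<notin> F" using cXF by auto
    have ecF: "enc c \<in> FS LL" using eF cX by blast
    have ac: "below a (enc c)"
    proof (cases a)
      case None then show ?thesis by (simp add: below_def)
    next
      case (Some ea)
      obtain xa where xa: "xa \<in> F" "ea = enc xa" using aE[OF Some] by blast
      have "P xa" using Some xa by (simp add: P_def)
      then have "(xa, c) \<in> X" using ig xa unfolding inGap_def by blast
      then have "enc xa = enc c \<or> lexless LL (enc xa) (enc c)" using X_le_enc FX xa cX by blast
      moreover have "enc xa \<noteq> enc c" using xa cnF enc_inj by metis
      ultimately show ?thesis using Some xa by (auto simp: below_def)
    qed
    have cb: "lexless LL (enc c) b"
    proof (cases "b = TT")
      case True then show ?thesis using S_T enc_S cX by blast
    next
      case False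
      then have "b \<in> E" using g by (simp add: gap_def)
      then obtain xb where xb: "xb \<in> F" "b = enc xb" using E_def by auto
      have "\<not> P xb"
      proof
        assume "P xb"
        then obtain ea where ea: "a = Some ea" "enc xb = ea \<or> lexless LL (enc xb) ea" by (auto simp: P_def)
        have "lexless LL ea b" using g ea(1) by (simp add: gap_def below_def)
        obtain xa where xa: "xa \<in> F" "ea = enc xa" using aE[OF ea(1)] by blast
        have xbX: "xb \<in> Field X" and xaX: "xa \<in> Field X" using xb xa FX by auto
        show False
        proof (cases "enc xb = ea")
          case True then show False using \<open>lexless LL ea b\<close> xb lexless_irrefl by simp
        next
          case False
          then have "lexless LL (enc xb) (enc xa)" using ea(2) xa by simp
          moreover have "lexless LL (enc xa) (enc xb)" using \<open>lexless LL ea b\<close> xa xb by simp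
          ultimately show False using lexless_asym[OF eF[OF xbX] eF[OF xaX]] by blast
        qed
      qed
      then have "(xb, c) \<notin> X" using ig xb unfolding inGap_def by blast
      moreover have "xb \<noteq> c" using xb cnF by auto
      ultimately have "(c, xb) \<in> X" using Xtot cX FX xb by blast
      then have "enc c = enc xb \<or> lexless LL (enc c) (enc xb)" using X_le_enc FX xb cX by blast
      moreover have "enc c \<noteq> enc xb" using \<open>xb \<noteq> c\<close> enc_inj by metis
      ultimately show ?thesis using xb by auto
    qed
    have "enc c \<in> SS" using enc_S cX by blast
    then have "(Rf (insert (enc c) E), Rf E) \<in> omega_times LL \<and> Rf (insert (enc c) E) \<noteq> Rf E"
      using dec ac cb by blast
    then show "(RX (insert c F), RX F) \<in> omega_times LL \<and> RX (insert c F) \<noteq> RX F"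
      by (simp add: RX_def E_def)
  qed
  then show ?thesis using cutP by blast
qed

end


lemma omega_times_iff: "((b,n),(c,p)) \<in> omega_times L \<longleftrightarrow>
   b \<in> Field L \<and> c \<in> Field L \<and> ((b,c) \<in> L \<and> b \<noteq> c \<or> b = c \<and> n \<le> p)"
  by (simp add: omega_times_def)

context Xctx begin

lemma RX_empty: "RX {} = (None, floor_log m)"
proof -
  have gE: "gap {} a b \<longleftrightarrow> a = None \<and> b = TT" for a b
    unfolding gap_def below_def by (cases a) auto
  obtain a b where "gap {} a b" "Rf {} = rho a b" using Rf_prop[of "{}"] by auto
  then have R: "Rf {} = rho None TT" using gE by auto
  have z: "(\<lambda>_. 0) \<in> FS LL" by (rule zero_FS)
  have T: "TT \<in> FS LL" by (rule T_FS)
  have ne: "(\<lambda>_::'b option. 0::nat) \<noteq> TT" using m1 by (metis (full_types) not_one_le_zero)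
  have td: "td LL (\<lambda>_. 0) TT = None"
    using td_eqI[OF z T, of None] m1 None_above by auto
  have "rho None TT = (None, floor_log m)"
    unfolding rho_def lo_def using ne td by (simp add: ex_def)
  then show ?thesis using R by (simp add: RX_def)
qed

definition psi :: "'b option \<times> nat \<Rightarrow> ('b \<times> nat) + nat" where
  "psi p = (case fst p of Some b \<Rightarrow> Inl (b, snd p) | None \<Rightarrow> Inr (snd p))"

definition phi :: "('b \<times> nat) + nat \<Rightarrow> 'b option \<times> nat" where
  "phi u = (case u of Inl p \<Rightarrow> (Some (fst p), snd p) | Inr n \<Rightarrow> (None, n))"

lemma phi_psi: "phi (psi p) = p" by (cases p; case_tac a) (auto simp: phi_def psi_def)
lemma psi_phi: "psi (phi u) = u" by (cases u) (auto simp: phi_def psi_def)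

lemma dir_image_psi: "(u,v) \<in> dir_image R psi \<longleftrightarrow> (phi u, phi v) \<in> R"
proof
  assume "(u,v) \<in> dir_image R psi"
  then obtain a b where "u = psi a" "v = psi b" "(a,b) \<in> R" unfolding dir_image_def by blast
  then show "(phi u, phi v) \<in> R" by (simp add: phi_psi)
next
  assume h: "(phi u, phi v) \<in> R"
  have "(psi (phi u), psi (phi v)) \<in> dir_image R psi" using h unfolding dir_image_def by blast
  then show "(u,v) \<in> dir_image R psi" by (simp add: psi_phi)
qed

lemma SW_Ref_iso: "SW (omega_times LL) (None, k) =o ord_plus_nat (omega_times Bo) k"
proof -
  let ?R = "SW (omega_times LL) (None, k)"
  have W: "Well_order ?R" by (rule SW_WO[OF WRef])
  have inj: "inj_on psi (Field ?R)" using phi_psi by (metis inj_onI)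
  have FB: "Field (omega_times Bo) = Field Bo \<times> UNIV"
    using WBo Field_omega_times by (auto simp: order_on_defs)
  have "(u,v) \<in> dir_image ?R psi \<longleftrightarrow> (u,v) \<in> ord_plus_nat (omega_times Bo) k" for u v
      unfolding dir_image_psi SW_def
      by (cases u; cases v)
         (auto simp: phi_def ord_plus_nat_def underS_def Ref_iff top_ext_iff FLL FB omega_times_iff)
  then have "dir_image ?R psi = ord_plus_nat (omega_times Bo) k" by (metis set_eqI surj_pair)
  then show ?thesis using dir_image_ordIso[OF W inj] by simp
qed

end

lemma SW_top_iso:
  assumes WG: "Well_order G"
  shows "SW (top_ext G) None =o G"
proof -
  have "(u,v) \<in> SW (top_ext G) None \<longleftrightarrow> (u,v) \<in> dir_image G Some" for u v
      unfolding SW_def dir_image_def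
      by (cases u; cases v) (auto simp: underS_def top_ext_iff intro: FieldI1 FieldI2)
  then have "SW (top_ext G) None = dir_image G Some" by (metis set_eqI surj_pair)
  moreover have "G =o dir_image G Some" using dir_image_ordIso[OF WG, of Some] by (simp add: inj_on_def)
  ultimately show ?thesis using ordIso_symmetric by metis
qed


theorem theorem6p12:
  fixes Bo :: "'b rel" and m :: nat
  assumes "Well_order Bo" and "countable (Field Bo)" and "Field Bo \<noteq> {}" and "m \<ge> 1"
  shows "\<forall>G :: 'c rel. Well_order G \<longrightarrow>
           (rk_ge (ord_mult_nat (omega_pow Bo) m) {} G \<longleftrightarrow>
            (G, ord_plus_nat (omega_times Bo) (nat \<lfloor>log 2 (real m)\<rfloor>)) \<in> ordLeq)"
proof -
  have WBo: "Well_order Bo" and m1: "m \<ge> 1" using assms by auto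
  have wf: "wf (Bo - Id)" using WBo by (simp add: order_on_defs)
  obtain d where d: "d \<in> Field Bo" using assms(3) by blast
  obtain b0 where b0F: "b0 \<in> Field Bo" and b0m: "\<And>y. (y, b0) \<in> Bo - Id \<Longrightarrow> y \<notin> Field Bo"
    using wfE_min[OF wf d] by blast
  have b0min: "(b0, y) \<in> Bo" if y: "y \<in> Field Bo" for y
  proof (cases "y = b0")
    case True then show ?thesis using b0F WBo by (auto simp: order_on_defs refl_on_def)
  next
    case False
    then have "(b0,y) \<in> Bo \<or> (y,b0) \<in> Bo" using WBo y b0F by (auto simp: order_on_defs total_on_def)
    then show ?thesis using b0m y False by blast
  qed
  interpret Xctx Bo m b0 using WBo b0F b0min m1 by unfold_locales auto
  have klog: "nat \<lfloor>log 2 (real m)\<rfloor> = floor_log m" using floor_log_altdef[of m] m1 by simp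
  show ?thesis
  proof (intro allI impI)
    fix G :: "'c rel" assume WG: "Well_order G"
    have WW: "Well_order (top_ext G)" by (rule Well_order_top_ext[OF WG])
    have RF: "\<And>F. finite F \<Longrightarrow> F \<subseteq> Field X \<Longrightarrow> RX F \<in> Field (omega_times LL)"
      unfolding RX_def using Rf_Field encF_S by blast
    have A: "\<And>F P q. finite F \<Longrightarrow> F \<subseteq> Field X \<Longrightarrow> cutp X F P \<Longrightarrow> (q, RX F) \<in> omega_times LL \<Longrightarrow> q \<noteq> RX F \<Longrightarrow>
             \<exists>c \<in> Field X - F. inGap X F P c \<and> (q, RX (insert c F)) \<in> omega_times LL"
      using X_A by blast
    have B: "\<And>F. finite F \<Longrightarrow> F \<subseteq> Field X \<Longrightarrow> \<exists>P. cutp X F P \<and>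
             (\<forall>c \<in> Field X - F. inGap X F P c \<longrightarrow> (RX (insert c F), RX F) \<in> omega_times LL \<and> RX (insert c F) \<noteq> RX F)"
      using X_B by blast
    have "rk_ge X {} G \<longleftrightarrow> SW (top_ext G) None \<le>o SW (omega_times LL) (RX {})"
      unfolding rk_ge_def using framework[OF X_lin WRef WW RF A B, of "{}" None] by simp
    also have "\<dots> \<longleftrightarrow> SW (top_ext G) None \<le>o SW (omega_times LL) (None, floor_log m)"
      by (simp add: RX_empty)
    also have "\<dots> \<longleftrightarrow> G \<le>o ord_plus_nat (omega_times Bo) (floor_log m)"
    proof
      assume "SW (top_ext G) None \<le>o SW (omega_times LL) (None, floor_log m)"
      then show "G \<le>o ord_plus_nat (omega_times Bo) (floor_log m)"
        using SW_top_iso[OF WG] SW_Ref_iso ordIso_symmetric ordIso_ordLeq_trans ordLeq_ordIso_trans by metis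
    next
      assume "G \<le>o ord_plus_nat (omega_times Bo) (floor_log m)"
      then show "SW (top_ext G) None \<le>o SW (omega_times LL) (None, floor_log m)"
        using SW_top_iso[OF WG] SW_Ref_iso ordIso_symmetric ordIso_ordLeq_trans ordLeq_ordIso_trans by metis
    qed
    finally show "rk_ge (ord_mult_nat (omega_pow Bo) m) {} G \<longleftrightarrow>
            (G, ord_plus_nat (omega_times Bo) (nat \<lfloor>log 2 (real m)\<rfloor>)) \<in> ordLeq"
      using klog by simp
  qed
qed


end
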